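(* Let $\gamma$ denote the Euler–Mascheroni constant. Define $a_1=\frac12$, $a_2=\frac16$, $a_3=-\frac16$, $a_4=\frac35$, $a_5=-\frac35$, $a_6=\frac{79}{126}$, $a_7=-\frac{79}{126}$, $a_8=\frac{7230}{6241}$, $a_9=-\frac{7230}{6241}$, $a_{10}=\frac{4146631}{3833346}$, $a_{11}=-\frac{4146631}{3833346}$. For a positive integer $n$ and $k\in\{10,11\}$ define the finite continued fraction $$R_k(n)=\cfrac{a_1}{n+\cfrac{a_2 n}{n+\cfrac{a_3 n}{n+\cfrac{\ddots}{n+\cfrac{a_{k-1}n}{n+a_k}}}}},$$ i.e. $R_k(n)=a_1/T_2$ where $T_k=n+a_k$ and $T_j=n+\frac{a_j n}{T_{j+1}}$ for $2\le j\le k-1$, and let $r_k(n)=\sum_{m=1}^{n}\frac1m-\ln n-R_k(n)$. Put $C_{10}=-\frac{2755095121}{892586949408}$ and $C_{11}=\frac{20169451}{3821257440}$. Then for every positive integer $n$, $$-C_{10}\,\frac{1}{(n+1)^{11}}<\gamma-r_{10}(n)<-C_{10}\,\frac{1}{n^{11}},$$ $$C_{11}\,\frac{1}{(n+1)^{12}}<r_{11}(n)-\gamma<C_{11}\,\frac{1}{n^{12}}.$$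
   Context: $\gamma=\lim_{n\to\infty}\left(\sum_{m=1}^{n}\frac1m-\ln n\right)$ is the Euler–Mascheroni constant. The constants $C_{10},C_{11}$ are the limits $\lim_{n\to\infty}n^{k+1}(r_k(n)-\gamma)$ for $k=10,11$. *)

theory Defs
  imports "HOL-Analysis.Analysis"
begin

definition acoef :: "nat \<Rightarrow> real" where
  "acoef i = (if i = 1 then 1/2
    else if i = 2 then 1/6
    else if i = 3 then -1/6
    else if i = 4 then 3/5
    else if i = 5 then -3/5
    else if i = 6 then 79/126
    else if i = 7 then -79/126
    else if i = 8 then 7230/6241
    else if i = 9 then -7230/6241
    else if i = 10 then 4146631/3833346
    else if i = 11 then -4146631/3833346
    else 0)"

text \<open>T k n j: the tail T_j of the continued fraction; T_k = n + a_k,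
  T_j = n + a_j n / T_{j+1} for j < k. Defined by recursion on the distance k - j.\<close>
fun Ttail :: "nat \<Rightarrow> real \<Rightarrow> nat \<Rightarrow> real" where
  "Ttail k n 0 = n + acoef k"
| "Ttail k n (Suc d) = n + acoef (k - Suc d) * n / Ttail k n d"

definition T :: "nat \<Rightarrow> real \<Rightarrow> nat \<Rightarrow> real" where
  "T k n j = Ttail k n (k - j)"

definition R :: "nat \<Rightarrow> nat \<Rightarrow> real" where
  "R k n = acoef 1 / T k (real n) 2"

definition r :: "nat \<Rightarrow> nat \<Rightarrow> real" where
  "r k n = (\<Sum>m=1..n. 1 / real m) - ln (real n) - R k n"

definition C10 :: real where "C10 = - 2755095121 / 892586949408"
definition C11 :: real where "C11 = 20169451 / 3821257440"

end

theory Submission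
  imports Defs "HOL-Real_Asymp.Real_Asymp"
begin
lemma hp1: "0 < c \<Longrightarrow> 0 \<le> t \<Longrightarrow> 0 \<le> s \<Longrightarrow> 0 < c + t*(s::real)" by (simp add: add_pos_nonneg)
lemma hn1: "0 \<le> c \<Longrightarrow> 0 \<le> t \<Longrightarrow> 0 \<le> s \<Longrightarrow> 0 \<le> c + t*(s::real)" by simp
lemma frac_eq: "d \<noteq> 0 \<Longrightarrow> D \<noteq> 0 \<Longrightarrow> a * D = b * d \<Longrightarrow> a/d = b/(D::real)"
  by (simp add: field_simps)
lemma cf_step0: "B \<noteq> 0 \<Longrightarrow> C \<noteq> 0 \<Longrightarrow> x*(B + a*C) = E \<Longrightarrow> x + a*x/(B/C) = E/(B::real)"
  by (auto simp add: field_simps)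
lemma cf_step: "B \<noteq> 0 \<Longrightarrow> TT = B/C \<Longrightarrow> C \<noteq> 0 \<Longrightarrow> x*(B + a*C) = E \<Longrightarrow> x + a*x/TT = E/(B::real)"
  using cf_step0 by blast
lemma cf_fin: "B \<noteq> 0 \<Longrightarrow> C \<noteq> 0 \<Longrightarrow> D \<noteq> 0 \<Longrightarrow> (1/2)*C*D = N*B \<Longrightarrow> (1/2)/(B/C) = N/(D::real)"
  by (simp add: field_simps)
lemma frac_eq2: "d \<noteq> 0 \<Longrightarrow> D \<noteq> 0 \<Longrightarrow> c*a*D = b*d \<Longrightarrow> c*(a/d) = b/(D::real)"
  by (simp add: field_simps)

lemma ln_bounds_gen:
  fixes x :: real and N :: nat
  assumes x: "1 \<le> x"
  defines "y \<equiv> 1/(2 * x+1)"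
  shows "(\<Sum>k<N. 2 * y^(2 * k+1)/real (2 * k+1)) \<le> ln (1+1/x)"
    and "ln (1+1/x) \<le> (\<Sum>k<N. 2 * y^(2 * k+1)/real (2 * k+1)) + 2 * y^(2 * N+1)/real (2 * N+1) / (1-y^2)"
proof -
  have X: "1 + 1/x > 0" using x by (simp add: add_pos_nonneg)
  have yeq: "((1+1/x) - 1)/((1+1/x) + 1) = y" using x by (simp add: y_def field_simps)
  have sums: "(\<lambda>k. 2 * y^(2 * k+1)/real (2 * k+1)) sums ln (1+1/x)"
    using ln_series_quadratic[OF X] unfolding yeq by simp
  have y0: "0 < y" "y < 1" using x by (simp_all add: y_def)
  show "(\<Sum>k<N. 2 * y^(2 * k+1)/real (2 * k+1)) \<le> ln (1+1/x)"
    using sum_le_suminf[OF sums_summable[OF sums], of "{..<N}"] sums_unique[OF sums] y0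
    by auto
  have tail: "(\<lambda>k. 2 * y^(2 * (k+N)+1)/real (2 * (k+N)+1)) sums (ln (1+1/x) - (\<Sum>k<N. 2 * y^(2 * k+1)/real (2 * k+1)))"
    using sums_split_initial_segment[OF sums, of N] by simp
  have y2: "norm (y^2) < 1" using y0 by (simp add: power_less_one_iff abs_square_less_1)
  have geo: "(\<lambda>k. 2 * y^(2 * N+1)/real (2 * N+1) * (y^2)^k) sums (2 * y^(2 * N+1)/real (2 * N+1) * (1/(1-y^2)))"
    by (intro sums_mult geometric_sums y2)
  have le: "2 * y^(2 * (k+N)+1)/real (2 * (k+N)+1) \<le> 2 * y^(2 * N+1)/real (2 * N+1) * (y^2)^k" for k
  proof -
    have "y^(2 * (k+N)+1) = y^((2 * N+1) + 2 * k)" by (rule arg_cong[where f="\<lambda>m. y^m"]) simp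
    also have "\<dots> = y^(2 * N+1) * y^(2 * k)" by (rule power_add)
    also have "y^(2 * k) = (y^2)^k" by (rule power_mult)
    finally have e: "y^(2 * (k+N)+1) = y^(2 * N+1) * (y^2)^k" .
    have "0 \<le> y^(2 * N+1) * (y^2)^k" using y0 by simp
    then have "2 * y^(2 * (k+N)+1)/real (2 * (k+N)+1) \<le> 2 * (y^(2 * N+1) * (y^2)^k)/real (2 * N+1)"
      unfolding e by (intro divide_left_mono) auto
    then show ?thesis by simp
  qed
  have "ln (1+1/x) - (\<Sum>k<N. 2 * y^(2 * k+1)/real (2 * k+1)) \<le> 2 * y^(2 * N+1)/real (2 * N+1) * (1/(1-y^2))"
    by (rule sums_le[OF le tail geo])
  then show "ln (1+1/x) \<le> (\<Sum>k<N. 2 * y^(2 * k+1)/real (2 * k+1)) + 2 * y^(2 * N+1)/real (2 * N+1) / (1-y^2)"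
    by simp
qed

lemma ln_bounds7:
  fixes x :: real assumes x: "1 \<le> x"
  shows "2 * 1/((2 * x+1)) + (2/3) * 1/((2 * x+1)^3) + (2/5) * 1/((2 * x+1)^5) + (2/7) * 1/((2 * x+1)^7) + (2/9) * 1/((2 * x+1)^9) + (2/11) * 1/((2 * x+1)^11) + (2/13) * 1/((2 * x+1)^13) \<le> ln (1+1/x)"
    and "ln (1+1/x) \<le> 2 * 1/((2 * x+1)) + (2/3) * 1/((2 * x+1)^3) + (2/5) * 1/((2 * x+1)^5) + (2/7) * 1/((2 * x+1)^7) + (2/9) * 1/((2 * x+1)^9) + (2/11) * 1/((2 * x+1)^11) + (2/13) * 1/((2 * x+1)^13) + (1/30) * 1/(x * (x+1) * (2 * x+1)^13)"
proof -
  define y where "y = 1/(2 * x+1)"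
  have s: "(\<Sum>k<7. 2 * y^(2 * k+1)/real (2 * k+1)) = 2 * 1/((2 * x+1)) + (2/3) * 1/((2 * x+1)^3) + (2/5) * 1/((2 * x+1)^5) + (2/7) * 1/((2 * x+1)^7) + (2/9) * 1/((2 * x+1)^9) + (2/11) * 1/((2 * x+1)^11) + (2/13) * 1/((2 * x+1)^13)"
    by (simp add: eval_nat_numeral y_def power_one_over)
  have tl: "2 * y^(2 * 7+1)/real (2 * 7+1) / (1-y^2) = (1/30) * 1/(x * (x+1) * (2 * x+1)^13)"
  proof -
    define ww where "ww = 2 * x+1"
    have ww0: "0 < ww" using x by (simp add: ww_def)
    have xx: "x * (x+1) = (ww^2 - 1)/4" by (simp add: ww_def power2_eq_square algebra_simps)
    have y: "y = 1/ww" by (simp add: y_def ww_def)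
    have ww1: "ww^2 - 1 > 0" using x by (simp add: ww_def power2_eq_square algebra_simps) (smt (verit) mult_nonneg_nonneg)
    have "2 * y^(2 * 7+1)/real (2 * 7+1) / (1-y^2) = 2/(15 * ww^15) / ((ww^2-1)/ww^2)"
      using ww0 by (simp add: y power_one_over field_simps)
    also have "\<dots> = 2/(15 * ww^13 * (ww^2-1))" using ww0 ww1 by (simp add: field_simps eval_nat_numeral)
    also have "\<dots> = (1/30) * 1/(x * (x+1) * (2 * x+1)^13)"
    proof -
      have "(1/30) * 1/(x * (x+1) * (2 * x+1)^13) = (1/30) * 1/(((ww^2-1)/4) * ww^13)"
        by (simp only: xx ww_def[symmetric])
      then show ?thesis using ww1 ww0 by (simp add: field_simps)
    qed
    finally show ?thesis .
  qed
  show "2 * 1/((2 * x+1)) + (2/3) * 1/((2 * x+1)^3) + (2/5) * 1/((2 * x+1)^5) + (2/7) * 1/((2 * x+1)^7) + (2/9) * 1/((2 * x+1)^9) + (2/11) * 1/((2 * x+1)^11) + (2/13) * 1/((2 * x+1)^13) \<le> ln (1+1/x)"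
    using ln_bounds_gen(1)[OF x, of 7] unfolding s[unfolded y_def] by simp
  show "ln (1+1/x) \<le> 2 * 1/((2 * x+1)) + (2/3) * 1/((2 * x+1)^3) + (2/5) * 1/((2 * x+1)^5) + (2/7) * 1/((2 * x+1)^7) + (2/9) * 1/((2 * x+1)^9) + (2/11) * 1/((2 * x+1)^11) + (2/13) * 1/((2 * x+1)^13) + (1/30) * 1/(x * (x+1) * (2 * x+1)^13)"
    using ln_bounds_gen(2)[OF x, of 7] unfolding s[unfolded y_def] tl[unfolded y_def] by simp
qed

lemma ln_bounds7':
  fixes x :: real assumes x: "1 \<le> x"
  shows "2 * (1/((2 * x+1)^1)) + (2/3) * (1/((2 * x+1)^3)) + (2/5) * (1/((2 * x+1)^5)) + (2/7) * (1/((2 * x+1)^7)) + (2/9) * (1/((2 * x+1)^9)) + (2/11) * (1/((2 * x+1)^11)) + (2/13) * (1/((2 * x+1)^13)) \<le> ln (1+1/x)"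
    and "ln (1+1/x) \<le> 2 * (1/((2 * x+1)^1)) + (2/3) * (1/((2 * x+1)^3)) + (2/5) * (1/((2 * x+1)^5)) + (2/7) * (1/((2 * x+1)^7)) + (2/9) * (1/((2 * x+1)^9)) + (2/11) * (1/((2 * x+1)^11)) + (2/13) * (1/((2 * x+1)^13)) + (1/30) * (1/(x * (x+1) * (2 * x+1)^13))"
  using ln_bounds7[OF x] by simp_all

lemma Rform10:
  fixes n :: nat assumes n: "1 \<le> n"
  shows "R 10 n = (757663907 + real n * (1462202322 + real n * (3663389030 + real n * (1473250800 + real n * (1610005320))))) / (252996980 + real n * (2155378680 + real n * (4188622200 + real n * (7907306400 + real n * (3483170040 + real n * (3220010640))))))"
proof -
  define x where "x = real n"
  have x: "1 \<le> x" using n by (simp add: x_def)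
  define t where "t = x - 1"
  have t: "0 \<le> t" using x by (simp add: t_def)
  have xt: "x = t + 1" by (simp add: t_def)
  have nz0: "((4146631/3833346) + x * (1)) \<noteq> 0"
  proof -
    have "((4146631/3833346) + x * (1)) = ((7979977/3833346) + t * (1 + t * (0)))" unfolding xt by algebra
    moreover have "0 < ((7979977/3833346) + t * (1 + t * (0)))" using t by (intro hp1 hn1 order.refl) simp_all
    ultimately show ?thesis by simp
  qed
  have nz1: "(0 + x * ((-1835967509/23923912386) + x * (1))) \<noteq> 0"
  proof -
    have "(0 + x * ((-1835967509/23923912386) + x * (1))) = ((22087944877/23923912386) + t * ((46011857263/23923912386) + t * (1 + t * (0))))" unfolding xt by algebra
    moreover have "0 < ((22087944877/23923912386) + t * ((46011857263/23923912386) + t * (1 + t * (0))))" using t by (intro hp1 hn1 order.refl) simp_all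
    ultimately show ?thesis by simp
  qed
  have nz2: "(0 + x * ((262445/209429) + x * ((4146631/3833346) + x * (1)))) \<noteq> 0"
  proof -
    have "(0 + x * ((262445/209429) + x * ((4146631/3833346) + x * (1)))) = ((1009913653/302834334) + t * ((88325735/13765197) + t * ((15646669/3833346) + t * (1 + t * (0)))))" unfolding xt by algebra
    moreover have "0 < ((1009913653/302834334) + t * ((88325735/13765197) + t * ((15646669/3833346) + t * (1 + t * (0)))))" using t by (intro hp1 hn1 order.refl) simp_all
    ultimately show ?thesis by simp
  qed
  have nz3: "(0 + x * (0 + x * ((628511351/483001596) + x * ((18303431/40250133) + x * (1))))) \<noteq> 0"
  proof -
    have "(0 + x * (0 + x * ((628511351/483001596) + x * ((18303431/40250133) + x * (1))))) = ((1331154119/483001596) + t * ((1923976301/241500798) + t * ((4185444443/483001596) + t * ((179303963/40250133) + t * (1 + t * (0))))))" unfolding xt by algebra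
    moreover have "0 < ((1331154119/483001596) + t * ((1923976301/241500798) + t * ((4185444443/483001596) + t * ((179303963/40250133) + t * (1 + t * (0))))))" using t by (intro hp1 hn1 order.refl) simp_all
    ultimately show ?thesis by simp
  qed
  have nz4: "(0 + x * (0 + x * ((262445/334026) + x * ((110200/55671) + x * ((4146631/3833346) + x * (1)))))) \<noteq> 0"
  proof -
    have "(0 + x * (0 + x * ((262445/334026) + x * ((110200/55671) + x * ((4146631/3833346) + x * (1)))))) = ((195088981/40250133) + t * ((677682212/40250133) + t * ((1868775011/80500266) + t * ((72926048/4472237) + t * ((23313361/3833346) + t * (1 + t * (0)))))))" unfolding xt by algebra
    moreover have "0 < ((195088981/40250133) + t * ((677682212/40250133) + t * ((1868775011/80500266) + t * ((72926048/4472237) + t * ((23313361/3833346) + t * (1 + t * (0)))))))" using t by (intro hp1 hn1 order.refl) simp_all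
    ultimately show ?thesis by simp
  qed
  have nz5: "(0 + x * (0 + x * (0 + x * ((1327033/268334220) + x * ((5451789/3194455) + x * ((9233117/19166730) + x * (1))))))) \<noteq> 0"
  proof -
    have "(0 + x * (0 + x * (0 + x * ((1327033/268334220) + x * ((5451789/3194455) + x * ((9233117/19166730) + x * (1))))))) = ((856875167/268334220) + t * ((4092105713/268334220) + t * ((1613866487/53666844) + t * ((8492448917/268334220) + t * ((366377269/19166730) + t * ((124233497/19166730) + t * (1 + t * (0))))))))" unfolding xt by algebra
    moreover have "0 < ((856875167/268334220) + t * ((4092105713/268334220) + t * ((1613866487/53666844) + t * ((8492448917/268334220) + t * ((366377269/19166730) + t * ((124233497/19166730) + t * (1 + t * (0))))))))" using t by (intro hp1 hn1 order.refl) simp_all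
    ultimately show ?thesis by simp
  qed
  have nz6: "(0 + x * (0 + x * (0 + x * ((52489/111342) + x * ((45717919/38333460) + x * ((62449/26510) + x * ((4146631/3833346) + x * (1)))))))) \<noteq> 0"
  proof -
    have "(0 + x * (0 + x * (0 + x * ((52489/111342) + x * ((45717919/38333460) + x * ((62449/26510) + x * ((4146631/3833346) + x * (1)))))))) = ((545743697/89444740) + t * ((2110016413/67083555) + t * ((3101619503/44722370) + t * ((11462334551/134167110) + t * ((2460889939/38333460) + t * ((190683629/6388910) + t * ((30980053/3833346) + t * (1 + t * (0)))))))))" unfolding xt by algebra
    moreover have "0 < ((545743697/89444740) + t * ((2110016413/67083555) + t * ((3101619503/44722370) + t * ((11462334551/134167110) + t * ((2460889939/38333460) + t * ((190683629/6388910) + t * ((30980053/3833346) + t * (1 + t * (0)))))))))" using t by (intro hp1 hn1 order.refl) simp_all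
    ultimately show ?thesis by simp
  qed
  have nz7: "(0 + x * (0 + x * (0 + x * (0 + x * ((9839791/20909160) + x * ((34814341/38333460) + x * ((52334129/23000076) + x * ((1753870/1916673) + x * (1))))))))) \<noteq> 0"
  proof -
    have "(0 + x * (0 + x * (0 + x * (0 + x * ((9839791/20909160) + x * ((34814341/38333460) + x * ((52334129/23000076) + x * ((1753870/1916673) + x * (1))))))))) = ((1280930197/230000760) + t * ((3965342827/115000380) + t * ((893674154/9583365) + t * ((1384788901/9583365) + t * ((32469094481/230000760) + t * ((1147151597/12777820) + t * ((843661337/23000076) + t * ((17087254/1916673) + t * (1 + t * (0))))))))))" unfolding xt by algebra
    moreover have "0 < ((1280930197/230000760) + t * ((3965342827/115000380) + t * ((893674154/9583365) + t * ((1384788901/9583365) + t * ((32469094481/230000760) + t * ((1147151597/12777820) + t * ((843661337/23000076) + t * ((17087254/1916673) + t * (1 + t * (0))))))))))" using t by (intro hp1 hn1 order.refl) simp_all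
    ultimately show ?thesis by simp
  qed
  have nz8: "(0 + x * (0 + x * (0 + x * (0 + x * ((52489/668052) + x * ((3549/5302) + x * ((4986455/3833346) + x * ((6510/2651) + x * ((4146631/3833346) + x * (1)))))))))) \<noteq> 0"
  proof -
    have "(0 + x * (0 + x * (0 + x * (0 + x * ((52489/668052) + x * ((3549/5302) + x * ((4986455/3833346) + x * ((6510/2651) + x * ((4146631/3833346) + x * (1)))))))))) = ((1060374247/161000532) + t * ((3727930385/80500266) + t * ((1939182001/13416711) + t * ((10607904484/40250133) + t * ((50007909541/161000532) + t * ((85943659/348486) + t * ((169662469/1277782) + t * ((90293482/1916673) + t * ((38646745/3833346) + t * (1 + t * (0)))))))))))" unfolding xt by algebra
    moreover have "0 < ((1060374247/161000532) + t * ((3727930385/80500266) + t * ((1939182001/13416711) + t * ((10607904484/40250133) + t * ((50007909541/161000532) + t * ((85943659/348486) + t * ((169662469/1277782) + t * ((90293482/1916673) + t * ((38646745/3833346) + t * (1 + t * (0)))))))))))" using t by (intro hp1 hn1 order.refl) simp_all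
    ultimately show ?thesis by simp
  qed
  have nzD: "(252996980 + x * (2155378680 + x * (4188622200 + x * (7907306400 + x * (3483170040 + x * (3220010640)))))) \<noteq> 0"
  proof -
    have "(252996980 + x * (2155378680 + x * (4188622200 + x * (7907306400 + x * (3483170040 + x * (3220010640)))))) = (21207484940 + t * (64287275640 + t * (81009668040 + t * (54040092960 + t * (19583223240 + t * (3220010640 + t * (0)))))))" unfolding xt by algebra
    moreover have "0 < (21207484940 + t * (64287275640 + t * (81009668040 + t * (54040092960 + t * (19583223240 + t * (3220010640 + t * (0)))))))" using t by (intro hp1 hn1 order.refl) simp_all
    ultimately show ?thesis by simp
  qed
  have t0: "Ttail 10 x 0 = ((4146631/3833346) + x * (1)) / 1" by (simp add: acoef_def)
  have t1: "Ttail 10 x 1 = (0 + x * ((-1835967509/23923912386) + x * (1))) / ((4146631/3833346) + x * (1))"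
  proof -
    have "Ttail 10 x 1 = x + acoef 9 * x / Ttail 10 x 0" using Ttail.simps(2)[of 10 x 0] by (simp del: Ttail.simps add: eval_nat_numeral)
    also have "\<dots> = x + ((-7230/6241)) * x / Ttail 10 x 0" by (simp add: acoef_def)
    also have "\<dots> = (0 + x * ((-1835967509/23923912386) + x * (1))) / ((4146631/3833346) + x * (1))"
      by (rule cf_step[OF nz0 t0 one_neq_zero]) algebra
    finally show ?thesis .
  qed
  have t2: "Ttail 10 x 2 = (0 + x * ((262445/209429) + x * ((4146631/3833346) + x * (1)))) / (0 + x * ((-1835967509/23923912386) + x * (1)))"
  proof -
    have "Ttail 10 x 2 = x + acoef 8 * x / Ttail 10 x 1" using Ttail.simps(2)[of 10 x 1] by (simp del: Ttail.simps add: eval_nat_numeral)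
    also have "\<dots> = x + ((7230/6241)) * x / Ttail 10 x 1" by (simp add: acoef_def)
    also have "\<dots> = (0 + x * ((262445/209429) + x * ((4146631/3833346) + x * (1)))) / (0 + x * ((-1835967509/23923912386) + x * (1)))"
      by (rule cf_step[OF nz1 t1 nz0]) algebra
    finally show ?thesis .
  qed
  have t3: "Ttail 10 x 3 = (0 + x * (0 + x * ((628511351/483001596) + x * ((18303431/40250133) + x * (1))))) / (0 + x * ((262445/209429) + x * ((4146631/3833346) + x * (1))))"
  proof -
    have "Ttail 10 x 3 = x + acoef 7 * x / Ttail 10 x 2" using Ttail.simps(2)[of 10 x 2] by (simp del: Ttail.simps add: eval_nat_numeral)
    also have "\<dots> = x + ((-79/126)) * x / Ttail 10 x 2" by (simp add: acoef_def)
    also have "\<dots> = (0 + x * (0 + x * ((628511351/483001596) + x * ((18303431/40250133) + x * (1))))) / (0 + x * ((262445/209429) + x * ((4146631/3833346) + x * (1))))"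
      by (rule cf_step[OF nz2 t2 nz1]) algebra
    finally show ?thesis .
  qed
  have t4: "Ttail 10 x 4 = (0 + x * (0 + x * ((262445/334026) + x * ((110200/55671) + x * ((4146631/3833346) + x * (1)))))) / (0 + x * (0 + x * ((628511351/483001596) + x * ((18303431/40250133) + x * (1)))))"
  proof -
    have "Ttail 10 x 4 = x + acoef 6 * x / Ttail 10 x 3" using Ttail.simps(2)[of 10 x 3] by (simp del: Ttail.simps add: eval_nat_numeral)
    also have "\<dots> = x + ((79/126)) * x / Ttail 10 x 3" by (simp add: acoef_def)
    also have "\<dots> = (0 + x * (0 + x * ((262445/334026) + x * ((110200/55671) + x * ((4146631/3833346) + x * (1)))))) / (0 + x * (0 + x * ((628511351/483001596) + x * ((18303431/40250133) + x * (1)))))"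
      by (rule cf_step[OF nz3 t3 nz2]) algebra
    finally show ?thesis .
  qed
  have t5: "Ttail 10 x 5 = (0 + x * (0 + x * (0 + x * ((1327033/268334220) + x * ((5451789/3194455) + x * ((9233117/19166730) + x * (1))))))) / (0 + x * (0 + x * ((262445/334026) + x * ((110200/55671) + x * ((4146631/3833346) + x * (1))))))"
  proof -
    have "Ttail 10 x 5 = x + acoef 5 * x / Ttail 10 x 4" using Ttail.simps(2)[of 10 x 4] by (simp del: Ttail.simps add: eval_nat_numeral)
    also have "\<dots> = x + ((-3/5)) * x / Ttail 10 x 4" by (simp add: acoef_def)
    also have "\<dots> = (0 + x * (0 + x * (0 + x * ((1327033/268334220) + x * ((5451789/3194455) + x * ((9233117/19166730) + x * (1))))))) / (0 + x * (0 + x * ((262445/334026) + x * ((110200/55671) + x * ((4146631/3833346) + x * (1))))))"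
      by (rule cf_step[OF nz4 t4 nz3]) algebra
    finally show ?thesis .
  qed
  have t6: "Ttail 10 x 6 = (0 + x * (0 + x * (0 + x * ((52489/111342) + x * ((45717919/38333460) + x * ((62449/26510) + x * ((4146631/3833346) + x * (1)))))))) / (0 + x * (0 + x * (0 + x * ((1327033/268334220) + x * ((5451789/3194455) + x * ((9233117/19166730) + x * (1)))))))"
  proof -
    have "Ttail 10 x 6 = x + acoef 4 * x / Ttail 10 x 5" using Ttail.simps(2)[of 10 x 5] by (simp del: Ttail.simps add: eval_nat_numeral)
    also have "\<dots> = x + ((3/5)) * x / Ttail 10 x 5" by (simp add: acoef_def)
    also have "\<dots> = (0 + x * (0 + x * (0 + x * ((52489/111342) + x * ((45717919/38333460) + x * ((62449/26510) + x * ((4146631/3833346) + x * (1)))))))) / (0 + x * (0 + x * (0 + x * ((1327033/268334220) + x * ((5451789/3194455) + x * ((9233117/19166730) + x * (1)))))))"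
      by (rule cf_step[OF nz5 t5 nz4]) algebra
    finally show ?thesis .
  qed
  have t7: "Ttail 10 x 7 = (0 + x * (0 + x * (0 + x * (0 + x * ((9839791/20909160) + x * ((34814341/38333460) + x * ((52334129/23000076) + x * ((1753870/1916673) + x * (1))))))))) / (0 + x * (0 + x * (0 + x * ((52489/111342) + x * ((45717919/38333460) + x * ((62449/26510) + x * ((4146631/3833346) + x * (1))))))))"
  proof -
    have "Ttail 10 x 7 = x + acoef 3 * x / Ttail 10 x 6" using Ttail.simps(2)[of 10 x 6] by (simp del: Ttail.simps add: eval_nat_numeral)
    also have "\<dots> = x + ((-1/6)) * x / Ttail 10 x 6" by (simp add: acoef_def)
    also have "\<dots> = (0 + x * (0 + x * (0 + x * (0 + x * ((9839791/20909160) + x * ((34814341/38333460) + x * ((52334129/23000076) + x * ((1753870/1916673) + x * (1))))))))) / (0 + x * (0 + x * (0 + x * ((52489/111342) + x * ((45717919/38333460) + x * ((62449/26510) + x * ((4146631/3833346) + x * (1))))))))"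
      by (rule cf_step[OF nz6 t6 nz5]) algebra
    finally show ?thesis .
  qed
  have t8: "Ttail 10 x 8 = (0 + x * (0 + x * (0 + x * (0 + x * ((52489/668052) + x * ((3549/5302) + x * ((4986455/3833346) + x * ((6510/2651) + x * ((4146631/3833346) + x * (1)))))))))) / (0 + x * (0 + x * (0 + x * (0 + x * ((9839791/20909160) + x * ((34814341/38333460) + x * ((52334129/23000076) + x * ((1753870/1916673) + x * (1)))))))))"
  proof -
    have "Ttail 10 x 8 = x + acoef 2 * x / Ttail 10 x 7" using Ttail.simps(2)[of 10 x 7] by (simp del: Ttail.simps add: eval_nat_numeral)
    also have "\<dots> = x + ((1/6)) * x / Ttail 10 x 7" by (simp add: acoef_def)
    also have "\<dots> = (0 + x * (0 + x * (0 + x * (0 + x * ((52489/668052) + x * ((3549/5302) + x * ((4986455/3833346) + x * ((6510/2651) + x * ((4146631/3833346) + x * (1)))))))))) / (0 + x * (0 + x * (0 + x * (0 + x * ((9839791/20909160) + x * ((34814341/38333460) + x * ((52334129/23000076) + x * ((1753870/1916673) + x * (1)))))))))"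
      by (rule cf_step[OF nz7 t7 nz6]) algebra
    finally show ?thesis .
  qed
  have "R 10 n = acoef 1 / Ttail 10 x 8" by (simp add: R_def T_def x_def)
  also have "\<dots> = (1/2) / ((0 + x * (0 + x * (0 + x * (0 + x * ((52489/668052) + x * ((3549/5302) + x * ((4986455/3833346) + x * ((6510/2651) + x * ((4146631/3833346) + x * (1)))))))))) / (0 + x * (0 + x * (0 + x * (0 + x * ((9839791/20909160) + x * ((34814341/38333460) + x * ((52334129/23000076) + x * ((1753870/1916673) + x * (1))))))))))" by (simp add: acoef_def t8)
  also have "\<dots> = (757663907 + x * (1462202322 + x * (3663389030 + x * (1473250800 + x * (1610005320))))) / (252996980 + x * (2155378680 + x * (4188622200 + x * (7907306400 + x * (3483170040 + x * (3220010640))))))"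
    apply (rule cf_fin[OF nz8 nz7 nzD]) by algebra
  finally show ?thesis by (simp add: x_def)
qed
lemma Rform11:
  fixes n :: nat assumes n: "1 \<le> n"
  shows "R 11 n = ((-262445) + real n * (2235870 + real n * ((-1311429) + real n * (8202600 + real n * ((-556710) + real n * (3340260)))))) / (0 + real n * (0 + real n * (4471740 + real n * (0 + real n * (16405200 + real n * (0 + real n * (6680520)))))))"
proof -
  define x where "x = real n"
  have x: "1 \<le> x" using n by (simp add: x_def)
  define t where "t = x - 1"
  have t: "0 \<le> t" using x by (simp add: t_def)
  have xt: "x = t + 1" by (simp add: t_def)
  have nz0: "((-4146631/3833346) + x * (1)) \<noteq> 0"
  proof
    assume "((-4146631/3833346) + x * (1)) = 0"
    then have "real n * 3833346 = 4146631" unfolding x_def by (simp add: field_simps)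
    then have "1 < real n" "real n < 2" by linarith+
    then have "1 < n" "n < 2" by simp_all
    then show False by simp
  qed
  have nz1: "(0 + x * (0 + x * (1))) \<noteq> 0"
  proof -
    have "(0 + x * (0 + x * (1))) = (1 + t * (2 + t * (1 + t * (0))))" unfolding xt by algebra
    moreover have "0 < (1 + t * (2 + t * (1 + t * (0))))" using t by (intro hp1 hn1 order.refl) simp_all
    ultimately show ?thesis by simp
  qed
  have nz2: "(0 + x * ((262445/209429) + x * ((-7230/6241) + x * (1)))) \<noteq> 0"
  proof -
    have "(0 + x * ((262445/209429) + x * ((-7230/6241) + x * (1)))) = ((18111316/16544891) + t * ((32034368/16544891) + t * ((11493/6241) + t * (1 + t * (0)))))" unfolding xt by algebra
    moreover have "0 < ((18111316/16544891) + t * ((32034368/16544891) + t * ((11493/6241) + t * (1 + t * (0)))))" using t by (intro hp1 hn1 order.refl) simp_all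
    ultimately show ?thesis by simp
  qed
  have nz3: "(0 + x * (0 + x * ((262445/209429) + x * (0 + x * (1))))) \<noteq> 0"
  proof -
    have "(0 + x * (0 + x * ((262445/209429) + x * (0 + x * (1))))) = ((471874/209429) + t * ((1362606/209429) + t * ((1519019/209429) + t * (4 + t * (1 + t * (0))))))" unfolding xt by algebra
    moreover have "0 < ((471874/209429) + t * ((1362606/209429) + t * ((1519019/209429) + t * (4 + t * (1 + t * (0))))))" using t by (intro hp1 hn1 order.refl) simp_all
    ultimately show ?thesis by simp
  qed
  have nz4: "(0 + x * (0 + x * ((-262445/334026) + x * ((110200/55671) + x * ((-79/126) + x * (1)))))) \<noteq> 0"
  proof -
    have "(0 + x * (0 + x * ((-262445/334026) + x * ((110200/55671) + x * ((-79/126) + x * (1)))))) = ((261676/167013) + t * ((34714/5061) + t * ((3804841/334026) + t * ((1581872/167013) + t * ((551/126) + t * (1 + t * (0)))))))" unfolding xt by algebra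
    moreover have "0 < ((261676/167013) + t * ((34714/5061) + t * ((3804841/334026) + t * ((1581872/167013) + t * ((551/126) + t * (1 + t * (0)))))))" using t by (intro hp1 hn1 order.refl) simp_all
    ultimately show ?thesis by simp
  qed
  have nz5: "(0 + x * (0 + x * (0 + x * (0 + x * ((110200/55671) + x * (0 + x * (1))))))) \<noteq> 0"
  proof -
    have "(0 + x * (0 + x * (0 + x * (0 + x * ((110200/55671) + x * (0 + x * (1))))))) = ((165871/55671) + t * ((774826/55671) + t * ((498755/18557) + t * ((1554220/55671) + t * ((945265/55671) + t * (6 + t * (1 + t * (0))))))))" unfolding xt by algebra
    moreover have "0 < ((165871/55671) + t * ((774826/55671) + t * ((498755/18557) + t * ((1554220/55671) + t * ((945265/55671) + t * (6 + t * (1 + t * (0))))))))" using t by (intro hp1 hn1 order.refl) simp_all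
    ultimately show ?thesis by simp
  qed
  have nz6: "(0 + x * (0 + x * (0 + x * ((52489/111342) + x * ((-22040/18557) + x * ((62449/26510) + x * ((-3/5) + x * (1)))))))) \<noteq> 0"
  proof -
    have "(0 + x * (0 + x * (0 + x * ((52489/111342) + x * ((-22040/18557) + x * ((62449/26510) + x * ((-3/5) + x * (1)))))))) = ((81097/39765) + t * ((1098749/92785) + t * ((1107663/37114) + t * ((4707253/111342) + t * ((123457/3374) + t * ((523723/26510) + t * ((32/5) + t * (1 + t * (0)))))))))" unfolding xt by algebra
    moreover have "0 < ((81097/39765) + t * ((1098749/92785) + t * ((1107663/37114) + t * ((4707253/111342) + t * ((123457/3374) + t * ((523723/26510) + t * ((32/5) + t * (1 + t * (0)))))))))" using t by (intro hp1 hn1 order.refl) simp_all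
    ultimately show ?thesis by simp
  qed
  have nz7: "(0 + x * (0 + x * (0 + x * (0 + x * ((52489/111342) + x * (0 + x * ((62449/26510) + x * (0 + x * (1))))))))) \<noteq> 0"
  proof -
    have "(0 + x * (0 + x * (0 + x * (0 + x * ((52489/111342) + x * (0 + x * ((62449/26510) + x * (0 + x * (1))))))))) = ((1065292/278355) + t * ((6686017/278355) + t * ((2455599/37114) + t * ((5845412/55671) + t * ((5890358/55671) + t * ((929627/13255) + t * ((804729/26510) + t * (8 + t * (1 + t * (0))))))))))" unfolding xt by algebra
    moreover have "0 < ((1065292/278355) + t * ((6686017/278355) + t * ((2455599/37114) + t * ((5845412/55671) + t * ((5890358/55671) + t * ((929627/13255) + t * ((804729/26510) + t * (8 + t * (1 + t * (0))))))))))" using t by (intro hp1 hn1 order.refl) simp_all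
    ultimately show ?thesis by simp
  qed
  have nz8: "(0 + x * (0 + x * (0 + x * (0 + x * ((-52489/668052) + x * ((3549/5302) + x * ((-62449/159060) + x * ((6510/2651) + x * ((-1/6) + x * (1)))))))))) \<noteq> 0"
  proof -
    have "(0 + x * (0 + x * (0 + x * (0 + x * ((-52489/668052) + x * ((3549/5302) + x * ((-62449/159060) + x * ((6510/2651) + x * ((-1/6) + x * (1)))))))))) = ((5824073/1670130) + t * ((21321964/835065) + t * ((6178415/74228) + t * ((2416261/15183) + t * ((66023953/334026) + t * ((6622844/39765) + t * ((5096837/53020) + t * ((295234/7953) + t * ((53/6) + t * (1 + t * (0)))))))))))" unfolding xt by algebra
    moreover have "0 < ((5824073/1670130) + t * ((21321964/835065) + t * ((6178415/74228) + t * ((2416261/15183) + t * ((66023953/334026) + t * ((6622844/39765) + t * ((5096837/53020) + t * ((295234/7953) + t * ((53/6) + t * (1 + t * (0)))))))))))" using t by (intro hp1 hn1 order.refl) simp_all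
    ultimately show ?thesis by simp
  qed
  have nz9: "(0 + x * (0 + x * (0 + x * (0 + x * (0 + x * (0 + x * ((3549/5302) + x * (0 + x * ((6510/2651) + x * (0 + x * (1))))))))))) \<noteq> 0"
  proof -
    have "(0 + x * (0 + x * (0 + x * (0 + x * (0 + x * (0 + x * ((3549/5302) + x * (0 + x * ((6510/2651) + x * (0 + x * (1))))))))))) = ((21871/5302) + t * ((89237/2651) + t * ((656385/5302) + t * ((718170/2651) + t * ((2078055/5302) + t * ((1043259/2651) + t * ((1481529/5302) + t * ((370200/2651) + t * ((125805/2651) + t * (10 + t * (1 + t * (0))))))))))))" unfolding xt by algebra
    moreover have "0 < ((21871/5302) + t * ((89237/2651) + t * ((656385/5302) + t * ((718170/2651) + t * ((2078055/5302) + t * ((1043259/2651) + t * ((1481529/5302) + t * ((370200/2651) + t * ((125805/2651) + t * (10 + t * (1 + t * (0))))))))))))" using t by (intro hp1 hn1 order.refl) simp_all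
    ultimately show ?thesis by simp
  qed
  have nzD: "(0 + x * (0 + x * (4471740 + x * (0 + x * (16405200 + x * (0 + x * (6680520))))))) \<noteq> 0"
  proof -
    have "(0 + x * (0 + x * (4471740 + x * (0 + x * (16405200 + x * (0 + x * (6680520))))))) = (27557460 + t * (114647400 + t * (203110740 + t * (199231200 + t * (116613000 + t * (40083120 + t * (6680520 + t * (0))))))))" unfolding xt by algebra
    moreover have "0 < (27557460 + t * (114647400 + t * (203110740 + t * (199231200 + t * (116613000 + t * (40083120 + t * (6680520 + t * (0))))))))" using t by (intro hp1 hn1 order.refl) simp_all
    ultimately show ?thesis by simp
  qed
  have t0: "Ttail 11 x 0 = ((-4146631/3833346) + x * (1)) / 1" by (simp add: acoef_def)
  have t1: "Ttail 11 x 1 = (0 + x * (0 + x * (1))) / ((-4146631/3833346) + x * (1))"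
  proof -
    have "Ttail 11 x 1 = x + acoef 10 * x / Ttail 11 x 0" using Ttail.simps(2)[of 11 x 0] by (simp del: Ttail.simps add: eval_nat_numeral)
    also have "\<dots> = x + ((4146631/3833346)) * x / Ttail 11 x 0" by (simp add: acoef_def)
    also have "\<dots> = (0 + x * (0 + x * (1))) / ((-4146631/3833346) + x * (1))"
      by (rule cf_step[OF nz0 t0 one_neq_zero]) algebra
    finally show ?thesis .
  qed
  have t2: "Ttail 11 x 2 = (0 + x * ((262445/209429) + x * ((-7230/6241) + x * (1)))) / (0 + x * (0 + x * (1)))"
  proof -
    have "Ttail 11 x 2 = x + acoef 9 * x / Ttail 11 x 1" using Ttail.simps(2)[of 11 x 1] by (simp del: Ttail.simps add: eval_nat_numeral)
    also have "\<dots> = x + ((-7230/6241)) * x / Ttail 11 x 1" by (simp add: acoef_def)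
    also have "\<dots> = (0 + x * ((262445/209429) + x * ((-7230/6241) + x * (1)))) / (0 + x * (0 + x * (1)))"
      by (rule cf_step[OF nz1 t1 nz0]) algebra
    finally show ?thesis .
  qed
  have t3: "Ttail 11 x 3 = (0 + x * (0 + x * ((262445/209429) + x * (0 + x * (1))))) / (0 + x * ((262445/209429) + x * ((-7230/6241) + x * (1))))"
  proof -
    have "Ttail 11 x 3 = x + acoef 8 * x / Ttail 11 x 2" using Ttail.simps(2)[of 11 x 2] by (simp del: Ttail.simps add: eval_nat_numeral)
    also have "\<dots> = x + ((7230/6241)) * x / Ttail 11 x 2" by (simp add: acoef_def)
    also have "\<dots> = (0 + x * (0 + x * ((262445/209429) + x * (0 + x * (1))))) / (0 + x * ((262445/209429) + x * ((-7230/6241) + x * (1))))"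
      by (rule cf_step[OF nz2 t2 nz1]) algebra
    finally show ?thesis .
  qed
  have t4: "Ttail 11 x 4 = (0 + x * (0 + x * ((-262445/334026) + x * ((110200/55671) + x * ((-79/126) + x * (1)))))) / (0 + x * (0 + x * ((262445/209429) + x * (0 + x * (1)))))"
  proof -
    have "Ttail 11 x 4 = x + acoef 7 * x / Ttail 11 x 3" using Ttail.simps(2)[of 11 x 3] by (simp del: Ttail.simps add: eval_nat_numeral)
    also have "\<dots> = x + ((-79/126)) * x / Ttail 11 x 3" by (simp add: acoef_def)
    also have "\<dots> = (0 + x * (0 + x * ((-262445/334026) + x * ((110200/55671) + x * ((-79/126) + x * (1)))))) / (0 + x * (0 + x * ((262445/209429) + x * (0 + x * (1)))))"
      by (rule cf_step[OF nz3 t3 nz2]) algebra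
    finally show ?thesis .
  qed
  have t5: "Ttail 11 x 5 = (0 + x * (0 + x * (0 + x * (0 + x * ((110200/55671) + x * (0 + x * (1))))))) / (0 + x * (0 + x * ((-262445/334026) + x * ((110200/55671) + x * ((-79/126) + x * (1))))))"
  proof -
    have "Ttail 11 x 5 = x + acoef 6 * x / Ttail 11 x 4" using Ttail.simps(2)[of 11 x 4] by (simp del: Ttail.simps add: eval_nat_numeral)
    also have "\<dots> = x + ((79/126)) * x / Ttail 11 x 4" by (simp add: acoef_def)
    also have "\<dots> = (0 + x * (0 + x * (0 + x * (0 + x * ((110200/55671) + x * (0 + x * (1))))))) / (0 + x * (0 + x * ((-262445/334026) + x * ((110200/55671) + x * ((-79/126) + x * (1))))))"
      by (rule cf_step[OF nz4 t4 nz3]) algebra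
    finally show ?thesis .
  qed
  have t6: "Ttail 11 x 6 = (0 + x * (0 + x * (0 + x * ((52489/111342) + x * ((-22040/18557) + x * ((62449/26510) + x * ((-3/5) + x * (1)))))))) / (0 + x * (0 + x * (0 + x * (0 + x * ((110200/55671) + x * (0 + x * (1)))))))"
  proof -
    have "Ttail 11 x 6 = x + acoef 5 * x / Ttail 11 x 5" using Ttail.simps(2)[of 11 x 5] by (simp del: Ttail.simps add: eval_nat_numeral)
    also have "\<dots> = x + ((-3/5)) * x / Ttail 11 x 5" by (simp add: acoef_def)
    also have "\<dots> = (0 + x * (0 + x * (0 + x * ((52489/111342) + x * ((-22040/18557) + x * ((62449/26510) + x * ((-3/5) + x * (1)))))))) / (0 + x * (0 + x * (0 + x * (0 + x * ((110200/55671) + x * (0 + x * (1)))))))"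
      by (rule cf_step[OF nz5 t5 nz4]) algebra
    finally show ?thesis .
  qed
  have t7: "Ttail 11 x 7 = (0 + x * (0 + x * (0 + x * (0 + x * ((52489/111342) + x * (0 + x * ((62449/26510) + x * (0 + x * (1))))))))) / (0 + x * (0 + x * (0 + x * ((52489/111342) + x * ((-22040/18557) + x * ((62449/26510) + x * ((-3/5) + x * (1))))))))"
  proof -
    have "Ttail 11 x 7 = x + acoef 4 * x / Ttail 11 x 6" using Ttail.simps(2)[of 11 x 6] by (simp del: Ttail.simps add: eval_nat_numeral)
    also have "\<dots> = x + ((3/5)) * x / Ttail 11 x 6" by (simp add: acoef_def)
    also have "\<dots> = (0 + x * (0 + x * (0 + x * (0 + x * ((52489/111342) + x * (0 + x * ((62449/26510) + x * (0 + x * (1))))))))) / (0 + x * (0 + x * (0 + x * ((52489/111342) + x * ((-22040/18557) + x * ((62449/26510) + x * ((-3/5) + x * (1))))))))"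
      by (rule cf_step[OF nz6 t6 nz5]) algebra
    finally show ?thesis .
  qed
  have t8: "Ttail 11 x 8 = (0 + x * (0 + x * (0 + x * (0 + x * ((-52489/668052) + x * ((3549/5302) + x * ((-62449/159060) + x * ((6510/2651) + x * ((-1/6) + x * (1)))))))))) / (0 + x * (0 + x * (0 + x * (0 + x * ((52489/111342) + x * (0 + x * ((62449/26510) + x * (0 + x * (1)))))))))"
  proof -
    have "Ttail 11 x 8 = x + acoef 3 * x / Ttail 11 x 7" using Ttail.simps(2)[of 11 x 7] by (simp del: Ttail.simps add: eval_nat_numeral)
    also have "\<dots> = x + ((-1/6)) * x / Ttail 11 x 7" by (simp add: acoef_def)
    also have "\<dots> = (0 + x * (0 + x * (0 + x * (0 + x * ((-52489/668052) + x * ((3549/5302) + x * ((-62449/159060) + x * ((6510/2651) + x * ((-1/6) + x * (1)))))))))) / (0 + x * (0 + x * (0 + x * (0 + x * ((52489/111342) + x * (0 + x * ((62449/26510) + x * (0 + x * (1)))))))))"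
      by (rule cf_step[OF nz7 t7 nz6]) algebra
    finally show ?thesis .
  qed
  have t9: "Ttail 11 x 9 = (0 + x * (0 + x * (0 + x * (0 + x * (0 + x * (0 + x * ((3549/5302) + x * (0 + x * ((6510/2651) + x * (0 + x * (1))))))))))) / (0 + x * (0 + x * (0 + x * (0 + x * ((-52489/668052) + x * ((3549/5302) + x * ((-62449/159060) + x * ((6510/2651) + x * ((-1/6) + x * (1))))))))))"
  proof -
    have "Ttail 11 x 9 = x + acoef 2 * x / Ttail 11 x 8" using Ttail.simps(2)[of 11 x 8] by (simp del: Ttail.simps add: eval_nat_numeral)
    also have "\<dots> = x + ((1/6)) * x / Ttail 11 x 8" by (simp add: acoef_def)
    also have "\<dots> = (0 + x * (0 + x * (0 + x * (0 + x * (0 + x * (0 + x * ((3549/5302) + x * (0 + x * ((6510/2651) + x * (0 + x * (1))))))))))) / (0 + x * (0 + x * (0 + x * (0 + x * ((-52489/668052) + x * ((3549/5302) + x * ((-62449/159060) + x * ((6510/2651) + x * ((-1/6) + x * (1))))))))))"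
      by (rule cf_step[OF nz8 t8 nz7]) algebra
    finally show ?thesis .
  qed
  have "R 11 n = acoef 1 / Ttail 11 x 9" by (simp add: R_def T_def x_def)
  also have "\<dots> = (1/2) / ((0 + x * (0 + x * (0 + x * (0 + x * (0 + x * (0 + x * ((3549/5302) + x * (0 + x * ((6510/2651) + x * (0 + x * (1))))))))))) / (0 + x * (0 + x * (0 + x * (0 + x * ((-52489/668052) + x * ((3549/5302) + x * ((-62449/159060) + x * ((6510/2651) + x * ((-1/6) + x * (1)))))))))))" by (simp add: acoef_def t9)
  also have "\<dots> = ((-262445) + x * (2235870 + x * ((-1311429) + x * (8202600 + x * ((-556710) + x * (3340260)))))) / (0 + x * (0 + x * (4471740 + x * (0 + x * (16405200 + x * (0 + x * (6680520)))))))"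
    apply (rule cf_fin[OF nz9 nz8 nzD]) by algebra
  finally show ?thesis by (simp add: x_def)
qed

lemma tele:
  fixes h :: "nat \<Rightarrow> real"
  assumes lim: "h \<longlonglongrightarrow> 0" and dec: "\<And>n. 1 \<le> n \<Longrightarrow> h (Suc n) < h n" and n: "1 \<le> n"
  shows "0 < h n"
proof -
  define g where "g k = h (k + n)" for k
  have "decseq g" unfolding g_def using n by (intro decseq_SucI) (simp add: dec less_imp_le)
  moreover have "g \<longlonglongrightarrow> 0" unfolding g_def by (rule LIMSEQ_ignore_initial_segment[OF lim])
  ultimately have "0 \<le> g 1" by (rule decseq_ge)
  then show ?thesis using dec[OF n] by (simp add: g_def)
qed

lemma harm_eq: "(\<Sum>m=1..n. 1 / real m) = harm n"
  by (simp add: harm_def inverse_eq_divide)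

lemma dstep:
  fixes n :: nat and k :: nat assumes n: "1 \<le> n"
  shows "(r k n - euler_mascheroni) - (r k (Suc n) - euler_mascheroni) = ln (1 + 1 / real n) - 1/(real n + 1) + R k (Suc n) - R k n"
proof -
  have "ln (1 + 1/real n) = ln ((real n + 1)/real n)" using n by (simp add: field_simps)
  also have "\<dots> = ln (real n + 1) - ln (real n)" using n by (subst ln_div) auto
  finally have "ln (1 + 1/real n) = ln (real n + 1) - ln (real n)" .
  then show ?thesis unfolding r_def using n by (simp add: algebra_simps)
qed


lemma lim10: "(\<lambda>n. r 10 n - euler_mascheroni) \<longlonglongrightarrow> 0"
proof -
  have a: "(\<lambda>n. (757663907 + real n * (1462202322 + real n * (3663389030 + real n * (1473250800 + real n * (1610005320))))) / (252996980 + real n * (2155378680 + real n * (4188622200 + real n * (7907306400 + real n * (3483170040 + real n * (3220010640))))))) \<longlonglongrightarrow> 0" by real_asymp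
  have "\<forall>\<^sub>F n in sequentially. (757663907 + real n * (1462202322 + real n * (3663389030 + real n * (1473250800 + real n * (1610005320))))) / (252996980 + real n * (2155378680 + real n * (4188622200 + real n * (7907306400 + real n * (3483170040 + real n * (3220010640)))))) = R 10 n"
    using eventually_ge_at_top[of 1] by eventually_elim (simp add: Rform10)
  then have b: "(\<lambda>n. R 10 n) \<longlonglongrightarrow> 0" using a tendsto_cong by fastforce
  have "(\<lambda>n. (harm n - ln (real n)) - R 10 n - euler_mascheroni) \<longlonglongrightarrow> euler_mascheroni - 0 - euler_mascheroni"
    by (intro tendsto_intros euler_mascheroni_LIMSEQ b)
  then have "(\<lambda>n. harm n - ln (real n) - R 10 n - euler_mascheroni) \<longlonglongrightarrow> 0" by simp
  then show ?thesis unfolding r_def harm_eq .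
qed


lemma lim11: "(\<lambda>n. r 11 n - euler_mascheroni) \<longlonglongrightarrow> 0"
proof -
  have a: "(\<lambda>n. ((-262445) + real n * (2235870 + real n * ((-1311429) + real n * (8202600 + real n * ((-556710) + real n * (3340260)))))) / (0 + real n * (0 + real n * (4471740 + real n * (0 + real n * (16405200 + real n * (0 + real n * (6680520)))))))) \<longlonglongrightarrow> 0" by real_asymp
  have "\<forall>\<^sub>F n in sequentially. ((-262445) + real n * (2235870 + real n * ((-1311429) + real n * (8202600 + real n * ((-556710) + real n * (3340260)))))) / (0 + real n * (0 + real n * (4471740 + real n * (0 + real n * (16405200 + real n * (0 + real n * (6680520))))))) = R 11 n"
    using eventually_ge_at_top[of 1] by eventually_elim (simp add: Rform11)
  then have b: "(\<lambda>n. R 11 n) \<longlonglongrightarrow> 0" using a tendsto_cong by fastforce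
  have "(\<lambda>n. (harm n - ln (real n)) - R 11 n - euler_mascheroni) \<longlonglongrightarrow> euler_mascheroni - 0 - euler_mascheroni"
    by (intro tendsto_intros euler_mascheroni_LIMSEQ b)
  then have "(\<lambda>n. harm n - ln (real n) - R 11 n - euler_mascheroni) \<longlonglongrightarrow> 0" by simp
  then show ?thesis unfolding r_def harm_eq .
qed

lemma core10lo:
  fixes x :: real assumes x: "1 \<le> x"
  shows "0 < 2 * (1/((2 * x+1)^1)) + (2/3) * (1/((2 * x+1)^3)) + (2/5) * (1/((2 * x+1)^5)) + (2/7) * (1/((2 * x+1)^7)) + (2/9) * (1/((2 * x+1)^9)) + (2/11) * (1/((2 * x+1)^11)) + (2/13) * (1/((2 * x+1)^13)) + (-1) * (1/((x+1))) + 1 * ((757663907 + (1 + x) * (1462202322 + (1 + x) * (3663389030 + (1 + x) * (1473250800 + (1 + x) * (1610005320)))))/((252996980 + (1 + x) * (2155378680 + (1 + x) * (4188622200 + (1 + x) * (7907306400 + (1 + x) * (3483170040 + (1 + x) * (3220010640)))))))) + (-1) * ((757663907 + x * (1462202322 + x * (3663389030 + x * (1473250800 + x * (1610005320)))))/((252996980 + x * (2155378680 + x * (4188622200 + x * (7907306400 + x * (3483170040 + x * (3220010640)))))))) + (2755095121/892586949408) * (1/(x^11)) + (-2755095121/892586949408) * (1/((x+1)^11))"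
proof -
  define t where "t = x - 1"
  have t: "0 \<le> t" using x by (simp add: t_def)
  have xt: "x = t + 1" by (simp add: t_def)
  define u z v w where "u = 2 * x+1" and "z = x" and "v = x+1" and "w = x+2"
  define p q m0 m1 where "p = (252996980 + x * (2155378680 + x * (4188622200 + x * (7907306400 + x * (3483170040 + x * (3220010640))))))" and "q = (252996980 + (1 + x) * (2155378680 + (1 + x) * (4188622200 + (1 + x) * (7907306400 + (1 + x) * (3483170040 + (1 + x) * (3220010640))))))" and "m0 = (757663907 + x * (1462202322 + x * (3663389030 + x * (1473250800 + x * (1610005320)))))" and "m1 = (757663907 + (1 + x) * (1462202322 + (1 + x) * (3663389030 + (1 + x) * (1473250800 + (1 + x) * (1610005320)))))"
  have pe: "p = (21207484940 + t * (64287275640 + t * (81009668040 + t * (54040092960 + t * (19583223240 + t * (3220010640 + t * (0)))))))" unfolding p_def xt by algebra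
  have qe: "q = (243347755460 + t * (482859836760 + t * (392829392760 + t * (164573092320 + t * (35683276440 + t * (3220010640 + t * (0)))))))" unfolding q_def xt by algebra
  have p0: "0 < p" unfolding pe using t by (intro hp1 hn1 order.refl) simp_all
  have q0: "0 < q" unfolding qe using t by (intro hp1 hn1 order.refl) simp_all
  have up: "0 < u" "0 < z" "0 < v" "0 < w" using x by (simp_all add: u_def z_def v_def w_def)
  have e0: "2 * (1/(u^1)) = (116036303423040 * u^12 * z^11 * v^11 * p * q)/(58018151711520 * u^13 * z^11 * v^11 * p * q)"
    apply (rule frac_eq2) subgoal using p0 q0 up by simp subgoal using p0 q0 up by simp by algebra
  have e1: "(2/3) * (1/(u^3)) = (38678767807680 * u^10 * z^11 * v^11 * p * q)/(58018151711520 * u^13 * z^11 * v^11 * p * q)"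
    apply (rule frac_eq2) subgoal using p0 q0 up by simp subgoal using p0 q0 up by simp by algebra
  have e2: "(2/5) * (1/(u^5)) = (23207260684608 * u^8 * z^11 * v^11 * p * q)/(58018151711520 * u^13 * z^11 * v^11 * p * q)"
    apply (rule frac_eq2) subgoal using p0 q0 up by simp subgoal using p0 q0 up by simp by algebra
  have e3: "(2/7) * (1/(u^7)) = (16576614774720 * u^6 * z^11 * v^11 * p * q)/(58018151711520 * u^13 * z^11 * v^11 * p * q)"
    apply (rule frac_eq2) subgoal using p0 q0 up by simp subgoal using p0 q0 up by simp by algebra
  have e4: "(2/9) * (1/(u^9)) = (12892922602560 * u^4 * z^11 * v^11 * p * q)/(58018151711520 * u^13 * z^11 * v^11 * p * q)"
    apply (rule frac_eq2) subgoal using p0 q0 up by simp subgoal using p0 q0 up by simp by algebra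
  have e5: "(2/11) * (1/(u^11)) = (10548754856640 * u^2 * z^11 * v^11 * p * q)/(58018151711520 * u^13 * z^11 * v^11 * p * q)"
    apply (rule frac_eq2) subgoal using p0 q0 up by simp subgoal using p0 q0 up by simp by algebra
  have e6: "(2/13) * (1/(u^13)) = (8925869494080 * z^11 * v^11 * p * q)/(58018151711520 * u^13 * z^11 * v^11 * p * q)"
    apply (rule frac_eq2) subgoal using p0 q0 up by simp subgoal using p0 q0 up by simp by algebra
  have e7: "(-1) * (1/(v)) = ((-58018151711520) * u^13 * z^11 * v^10 * p * q)/(58018151711520 * u^13 * z^11 * v^11 * p * q)"
    apply (rule frac_eq2) subgoal using p0 q0 up by simp subgoal using p0 q0 up by simp by algebra
  have e8: "1 * (m1/(q)) = (58018151711520 * u^13 * z^11 * v^11 * p * m1)/(58018151711520 * u^13 * z^11 * v^11 * p * q)"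
    apply (rule frac_eq2) subgoal using p0 q0 up by simp subgoal using p0 q0 up by simp by algebra
  have e9: "(-1) * (m0/(p)) = ((-58018151711520) * u^13 * z^11 * v^11 * q * m0)/(58018151711520 * u^13 * z^11 * v^11 * p * q)"
    apply (rule frac_eq2) subgoal using p0 q0 up by simp subgoal using p0 q0 up by simp by algebra
  have e10: "(2755095121/892586949408) * (1/(z^11)) = (179081182865 * u^13 * v^11 * p * q)/(58018151711520 * u^13 * z^11 * v^11 * p * q)"
    apply (rule frac_eq2) subgoal using p0 q0 up by simp subgoal using p0 q0 up by simp by algebra
  have e11: "(-2755095121/892586949408) * (1/(v^11)) = ((-179081182865) * u^13 * z^11 * p * q)/(58018151711520 * u^13 * z^11 * v^11 * p * q)"
    apply (rule frac_eq2) subgoal using p0 q0 up by simp subgoal using p0 q0 up by simp by algebra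
  have eq: "2 * (1/(u^1)) + (2/3) * (1/(u^3)) + (2/5) * (1/(u^5)) + (2/7) * (1/(u^7)) + (2/9) * (1/(u^9)) + (2/11) * (1/(u^11)) + (2/13) * (1/(u^13)) + (-1) * (1/(v)) + 1 * (m1/(q)) + (-1) * (m0/(p)) + (2755095121/892586949408) * (1/(z^11)) + (-2755095121/892586949408) * (1/(v^11)) = (116036303423040 * u^12 * z^11 * v^11 * p * q + 38678767807680 * u^10 * z^11 * v^11 * p * q + 23207260684608 * u^8 * z^11 * v^11 * p * q + 16576614774720 * u^6 * z^11 * v^11 * p * q + 12892922602560 * u^4 * z^11 * v^11 * p * q + 10548754856640 * u^2 * z^11 * v^11 * p * q + 8925869494080 * z^11 * v^11 * p * q + (-58018151711520) * u^13 * z^11 * v^10 * p * q + 58018151711520 * u^13 * z^11 * v^11 * p * m1 + (-58018151711520) * u^13 * z^11 * v^11 * q * m0 + 179081182865 * u^13 * v^11 * p * q + (-179081182865) * u^13 * z^11 * p * q) / (58018151711520 * u^13 * z^11 * v^11 * p * q)"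
    unfolding e0 e1 e2 e3 e4 e5 e6 e7 e8 e9 e10 e11 by (simp only: add_divide_distrib)
  have num: "116036303423040 * u^12 * z^11 * v^11 * p * q + 38678767807680 * u^10 * z^11 * v^11 * p * q + 23207260684608 * u^8 * z^11 * v^11 * p * q + 16576614774720 * u^6 * z^11 * v^11 * p * q + 12892922602560 * u^4 * z^11 * v^11 * p * q + 10548754856640 * u^2 * z^11 * v^11 * p * q + 8925869494080 * z^11 * v^11 * p * q + (-58018151711520) * u^13 * z^11 * v^10 * p * q + 58018151711520 * u^13 * z^11 * v^11 * p * m1 + (-58018151711520) * u^13 * z^11 * v^11 * q * m0 + 179081182865 * u^13 * v^11 * p * q + (-179081182865) * u^13 * z^11 * p * q = (3001610157553568190829528966239142871871600 + t * (57492092824019516383253644711499633267247600 + t * (534251584057472357680127939548013501809014000 + t * (3208430793824142100233856854414247370042758800 + t * (13994432663658769334658477599634312170615894400 + t * (47236767121302849596534822951705552014154661600 + t * (128372833050791479208546638418575455280182415200 + t * (288536033060759151806901695849070691960804567200 + t * (546759009425058354381919954403733725492556087600 + t * (885977429222440158292741877923717563953568634800 + t * (1240887939961107179645111186739404386432087381200 + t * (1514517198247451779609368012442691600820225794400 + t * (1620884009913120721784524816878009989135761046400 + t * (1528260006810903755811801726738229833689950691200 + t * (1273748198207267599849404579340089933228609177600 + t * (940595153350462987929492906136670669461934060800 + t * (616188450593724413199088389874241974499558491200 + t * (358235873351122408031018460038353017067784068800 + t * (184724850515358907700323809754723106408711265600 + t * (84359256666291407056189230623017338849719260800 + t * (34033703068491761334115127273578850953777996800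 + t * (12086244634740296688614103725622479212609824000 + t * (3759743865149102171849132901608403575906054400 + t * (1017925736925119371475563177573436873401088000 + t * (237862811277490209231501015338595211943616000 + t * (47451099426493495326255820307254446476889600 + t * (7965631503137251218783005078302803746649600 + t * (1103611967450439904594850905084927017984000 + t * (122819225168578248788000148652480330060800 + t * (10550025037555307156106080468852616806400 + t * (656310434434076001968945747078463590400 + t * (26302066331077303954675461147525120000 + t * (509579585030163282083808260338483200 + t * (0))))))))))))))))))))))))))))))))))"
    unfolding u_def z_def v_def w_def p_def q_def m0_def m1_def xt by algebra
  have "0 < (3001610157553568190829528966239142871871600 + t * (57492092824019516383253644711499633267247600 + t * (534251584057472357680127939548013501809014000 + t * (3208430793824142100233856854414247370042758800 + t * (13994432663658769334658477599634312170615894400 + t * (47236767121302849596534822951705552014154661600 + t * (128372833050791479208546638418575455280182415200 + t * (288536033060759151806901695849070691960804567200 + t * (546759009425058354381919954403733725492556087600 + t * (885977429222440158292741877923717563953568634800 + t * (1240887939961107179645111186739404386432087381200 + t * (1514517198247451779609368012442691600820225794400 + t * (1620884009913120721784524816878009989135761046400 + t * (1528260006810903755811801726738229833689950691200 + t * (1273748198207267599849404579340089933228609177600 + t * (940595153350462987929492906136670669461934060800 + t * (616188450593724413199088389874241974499558491200 + t * (358235873351122408031018460038353017067784068800 + t * (184724850515358907700323809754723106408711265600 + t * (84359256666291407056189230623017338849719260800 + t * (34033703068491761334115127273578850953777996800 + t * (12086244634740296688614103725622479212609824000 + t * (3759743865149102171849132901608403575906054400 + t * (1017925736925119371475563177573436873401088000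 + t * (237862811277490209231501015338595211943616000 + t * (47451099426493495326255820307254446476889600 + t * (7965631503137251218783005078302803746649600 + t * (1103611967450439904594850905084927017984000 + t * (122819225168578248788000148652480330060800 + t * (10550025037555307156106080468852616806400 + t * (656310434434076001968945747078463590400 + t * (26302066331077303954675461147525120000 + t * (509579585030163282083808260338483200 + t * (0))))))))))))))))))))))))))))))))))" using t by (intro hp1 hn1 order.refl) simp_all
  then have "0 < (116036303423040 * u^12 * z^11 * v^11 * p * q + 38678767807680 * u^10 * z^11 * v^11 * p * q + 23207260684608 * u^8 * z^11 * v^11 * p * q + 16576614774720 * u^6 * z^11 * v^11 * p * q + 12892922602560 * u^4 * z^11 * v^11 * p * q + 10548754856640 * u^2 * z^11 * v^11 * p * q + 8925869494080 * z^11 * v^11 * p * q + (-58018151711520) * u^13 * z^11 * v^10 * p * q + 58018151711520 * u^13 * z^11 * v^11 * p * m1 + (-58018151711520) * u^13 * z^11 * v^11 * q * m0 + 179081182865 * u^13 * v^11 * p * q + (-179081182865) * u^13 * z^11 * p * q) / (58018151711520 * u^13 * z^11 * v^11 * p * q)" using p0 q0 up num by simp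
  then have "0 < 2 * (1/(u^1)) + (2/3) * (1/(u^3)) + (2/5) * (1/(u^5)) + (2/7) * (1/(u^7)) + (2/9) * (1/(u^9)) + (2/11) * (1/(u^11)) + (2/13) * (1/(u^13)) + (-1) * (1/(v)) + 1 * (m1/(q)) + (-1) * (m0/(p)) + (2755095121/892586949408) * (1/(z^11)) + (-2755095121/892586949408) * (1/(v^11))" using eq by simp
  then show ?thesis unfolding u_def z_def v_def w_def p_def q_def m0_def m1_def .
qed

lemma bound10lo:
  fixes n :: nat assumes n: "1 \<le> n"
  shows "C10 * (1/(real n)^11) < r 10 n - euler_mascheroni"
proof -
  define h where "h m = (r 10 m - euler_mascheroni) - C10 * (1/(real m)^11)" for m
  have "0 < h n"
  proof (rule tele[OF _ _ n])
    have bl: "(\<lambda>m. C10 * (1/(real m)^11)) \<longlonglongrightarrow> 0" unfolding C10_def C11_def by real_asymp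
    show "h \<longlonglongrightarrow> 0" unfolding h_def using tendsto_diff[OF lim10 bl] tendsto_diff[OF bl lim10] by simp_all
  next
    fix m :: nat assume m: "1 \<le> m"
    define x where "x = real m"
    have x: "1 \<le> x" using m by (simp add: x_def)
    have c: "0 < 2 * (1/((2 * x+1)^1)) + (2/3) * (1/((2 * x+1)^3)) + (2/5) * (1/((2 * x+1)^5)) + (2/7) * (1/((2 * x+1)^7)) + (2/9) * (1/((2 * x+1)^9)) + (2/11) * (1/((2 * x+1)^11)) + (2/13) * (1/((2 * x+1)^13)) + (-1) * (1/((x+1))) + 1 * ((757663907 + (1 + x) * (1462202322 + (1 + x) * (3663389030 + (1 + x) * (1473250800 + (1 + x) * (1610005320)))))/((252996980 + (1 + x) * (2155378680 + (1 + x) * (4188622200 + (1 + x) * (7907306400 + (1 + x) * (3483170040 + (1 + x) * (3220010640)))))))) + (-1) * ((757663907 + x * (1462202322 + x * (3663389030 + x * (1473250800 + x * (1610005320)))))/((252996980 + x * (2155378680 + x * (4188622200 + x * (7907306400 + x * (3483170040 + x * (3220010640)))))))) + (2755095121/892586949408) * (1/(x^11)) + (-2755095121/892586949408) * (1/((x+1)^11))" using core10lo[OF x] .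
    have l: "2 * (1/((2 * x+1)^1)) + (2/3) * (1/((2 * x+1)^3)) + (2/5) * (1/((2 * x+1)^5)) + (2/7) * (1/((2 * x+1)^7)) + (2/9) * (1/((2 * x+1)^9)) + (2/11) * (1/((2 * x+1)^11)) + (2/13) * (1/((2 * x+1)^13)) \<le> ln (1+1/x)" using ln_bounds7'(1)[OF x] .
    have r0: "R 10 m = (757663907 + x * (1462202322 + x * (3663389030 + x * (1473250800 + x * (1610005320))))) / (252996980 + x * (2155378680 + x * (4188622200 + x * (7907306400 + x * (3483170040 + x * (3220010640))))))" using Rform10[OF m] by (simp add: x_def)
    have r1: "R 10 (Suc m) = (757663907 + (1 + x) * (1462202322 + (1 + x) * (3663389030 + (1 + x) * (1473250800 + (1 + x) * (1610005320))))) / (252996980 + (1 + x) * (2155378680 + (1 + x) * (4188622200 + (1 + x) * (7907306400 + (1 + x) * (3483170040 + (1 + x) * (3220010640))))))" using Rform10[of "Suc m"] m by (simp add: x_def)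
    have d: "(r 10 m - euler_mascheroni) - (r 10 (Suc m) - euler_mascheroni) = ln (1 + 1 / x) - 1/(x + 1) + R 10 (Suc m) - R 10 m"
      using dstep[OF m] by (simp add: x_def)
    have e0: "C10 * (1/(real m)^11) = (-2755095121/892586949408) * (1/x^11)" by (simp add: x_def C10_def)
    have e1: "C10 * (1/(real (Suc m))^11) = (-2755095121/892586949408) * (1/(x+1)^11)" by (simp add: x_def C10_def add.commute)
    show "h (Suc m) < h m" unfolding h_def e0 e1 using c l r0 r1 d by linarith
  qed
  then show ?thesis by (simp add: h_def)
qed

lemma core10up:
  fixes x :: real assumes x: "1 \<le> x"
  shows "0 < (-2755095121/892586949408) * (1/((x+1)^11)) + (2755095121/892586949408) * (1/((x+2)^11)) + (-2) * (1/((2 * x+1)^1)) + (-2/3) * (1/((2 * x+1)^3)) + (-2/5) * (1/((2 * x+1)^5)) + (-2/7) * (1/((2 * x+1)^7)) + (-2/9) * (1/((2 * x+1)^9)) + (-2/11) * (1/((2 * x+1)^11)) + (-2/13) * (1/((2 * x+1)^13)) + (-1/30) * (1/(x * (x+1) * (2 * x+1)^13)) + 1 * (1/((x+1))) + (-1) * ((757663907 + (1 + x) * (1462202322 + (1 + x) * (3663389030 + (1 + x) * (1473250800 + (1 + x) * (1610005320)))))/((252996980 + (1 + x) * (2155378680 + (1 + x) * (4188622200 + (1 + x) * (7907306400 + (1 + x) * (3483170040 + (1 + x) * (3220010640)))))))) + 1 * ((757663907 + x * (1462202322 + x * (3663389030 + x * (1473250800 + x * (1610005320)))))/((252996980 +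 x * (2155378680 + x * (4188622200 + x * (7907306400 + x * (3483170040 + x * (3220010640))))))))"
proof -
  define t where "t = x - 1"
  have t: "0 \<le> t" using x by (simp add: t_def)
  have xt: "x = t + 1" by (simp add: t_def)
  define u z v w where "u = 2 * x+1" and "z = x" and "v = x+1" and "w = x+2"
  define p q m0 m1 where "p = (252996980 + x * (2155378680 + x * (4188622200 + x * (7907306400 + x * (3483170040 + x * (3220010640))))))" and "q = (252996980 + (1 + x) * (2155378680 + (1 + x) * (4188622200 + (1 + x) * (7907306400 + (1 + x) * (3483170040 + (1 + x) * (3220010640))))))" and "m0 = (757663907 + x * (1462202322 + x * (3663389030 + x * (1473250800 + x * (1610005320)))))" and "m1 = (757663907 + (1 + x) * (1462202322 + (1 + x) * (3663389030 + (1 + x) * (1473250800 + (1 + x) * (1610005320)))))"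
  have pe: "p = (21207484940 + t * (64287275640 + t * (81009668040 + t * (54040092960 + t * (19583223240 + t * (3220010640 + t * (0)))))))" unfolding p_def xt by algebra
  have qe: "q = (243347755460 + t * (482859836760 + t * (392829392760 + t * (164573092320 + t * (35683276440 + t * (3220010640 + t * (0)))))))" unfolding q_def xt by algebra
  have p0: "0 < p" unfolding pe using t by (intro hp1 hn1 order.refl) simp_all
  have q0: "0 < q" unfolding qe using t by (intro hp1 hn1 order.refl) simp_all
  have up: "0 < u" "0 < z" "0 < v" "0 < w" using x by (simp_all add: u_def z_def v_def w_def)
  have e0: "(-2755095121/892586949408) * (1/(v^11)) = ((-179081182865) * u^13 * z * w^11 * p * q)/(58018151711520 * u^13 * z * v^11 * w^11 * p * q)"
    apply (rule frac_eq2) subgoal using p0 q0 up by simp subgoal using p0 q0 up by simp by algebra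
  have e1: "(2755095121/892586949408) * (1/(w^11)) = (179081182865 * u^13 * z * v^11 * p * q)/(58018151711520 * u^13 * z * v^11 * w^11 * p * q)"
    apply (rule frac_eq2) subgoal using p0 q0 up by simp subgoal using p0 q0 up by simp by algebra
  have e2: "(-2) * (1/(u^1)) = ((-116036303423040) * u^12 * z * v^11 * w^11 * p * q)/(58018151711520 * u^13 * z * v^11 * w^11 * p * q)"
    apply (rule frac_eq2) subgoal using p0 q0 up by simp subgoal using p0 q0 up by simp by algebra
  have e3: "(-2/3) * (1/(u^3)) = ((-38678767807680) * u^10 * z * v^11 * w^11 * p * q)/(58018151711520 * u^13 * z * v^11 * w^11 * p * q)"
    apply (rule frac_eq2) subgoal using p0 q0 up by simp subgoal using p0 q0 up by simp by algebra
  have e4: "(-2/5) * (1/(u^5)) = ((-23207260684608) * u^8 * z * v^11 * w^11 * p * q)/(58018151711520 * u^13 * z * v^11 * w^11 * p * q)"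
    apply (rule frac_eq2) subgoal using p0 q0 up by simp subgoal using p0 q0 up by simp by algebra
  have e5: "(-2/7) * (1/(u^7)) = ((-16576614774720) * u^6 * z * v^11 * w^11 * p * q)/(58018151711520 * u^13 * z * v^11 * w^11 * p * q)"
    apply (rule frac_eq2) subgoal using p0 q0 up by simp subgoal using p0 q0 up by simp by algebra
  have e6: "(-2/9) * (1/(u^9)) = ((-12892922602560) * u^4 * z * v^11 * w^11 * p * q)/(58018151711520 * u^13 * z * v^11 * w^11 * p * q)"
    apply (rule frac_eq2) subgoal using p0 q0 up by simp subgoal using p0 q0 up by simp by algebra
  have e7: "(-2/11) * (1/(u^11)) = ((-10548754856640) * u^2 * z * v^11 * w^11 * p * q)/(58018151711520 * u^13 * z * v^11 * w^11 * p * q)"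
    apply (rule frac_eq2) subgoal using p0 q0 up by simp subgoal using p0 q0 up by simp by algebra
  have e8: "(-2/13) * (1/(u^13)) = ((-8925869494080) * z * v^11 * w^11 * p * q)/(58018151711520 * u^13 * z * v^11 * w^11 * p * q)"
    apply (rule frac_eq2) subgoal using p0 q0 up by simp subgoal using p0 q0 up by simp by algebra
  have e9: "(-1/30) * (1/(z * v * u^13)) = ((-1933938390384) * v^10 * w^11 * p * q)/(58018151711520 * u^13 * z * v^11 * w^11 * p * q)"
    apply (rule frac_eq2) subgoal using p0 q0 up by simp subgoal using p0 q0 up by simp by algebra
  have e10: "1 * (1/(v)) = (58018151711520 * u^13 * z * v^10 * w^11 * p * q)/(58018151711520 * u^13 * z * v^11 * w^11 * p * q)"
    apply (rule frac_eq2) subgoal using p0 q0 up by simp subgoal using p0 q0 up by simp by algebra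
  have e11: "(-1) * (m1/(q)) = ((-58018151711520) * u^13 * z * v^11 * w^11 * p * m1)/(58018151711520 * u^13 * z * v^11 * w^11 * p * q)"
    apply (rule frac_eq2) subgoal using p0 q0 up by simp subgoal using p0 q0 up by simp by algebra
  have e12: "1 * (m0/(p)) = (58018151711520 * u^13 * z * v^11 * w^11 * q * m0)/(58018151711520 * u^13 * z * v^11 * w^11 * p * q)"
    apply (rule frac_eq2) subgoal using p0 q0 up by simp subgoal using p0 q0 up by simp by algebra
  have eq: "(-2755095121/892586949408) * (1/(v^11)) + (2755095121/892586949408) * (1/(w^11)) + (-2) * (1/(u^1)) + (-2/3) * (1/(u^3)) + (-2/5) * (1/(u^5)) + (-2/7) * (1/(u^7)) + (-2/9) * (1/(u^9)) + (-2/11) * (1/(u^11)) + (-2/13) * (1/(u^13)) + (-1/30) * (1/(z * v * u^13)) + 1 * (1/(v)) + (-1) * (m1/(q)) + 1 * (m0/(p)) = ((-179081182865) * u^13 * z * w^11 * p * q + 179081182865 * u^13 * z * v^11 * p * q + (-116036303423040) * u^12 * z * v^11 * w^11 * p * q + (-38678767807680) * u^10 * z * v^11 * w^11 * p * q + (-23207260684608) * u^8 * z * v^11 * w^11 * p * q + (-16576614774720) * u^6 * z * v^11 * w^11 * p * q + (-12892922602560) * u^4 * z * v^11 * w^11 * p * q + (-10548754856640) * u^2 * z * v^11 * w^11 * p * q + (-8925869494080) * z * v^11 * w^11 * p * q + (-1933938390384) * v^10 * w^11 * p * q + 58018151711520 * u^13 * z * v^10 * w^11 * p * q + (-58018151711520)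 * u^13 * z * v^11 * w^11 * p * m1 + 58018151711520 * u^13 * z * v^11 * w^11 * q * m0) / (58018151711520 * u^13 * z * v^11 * w^11 * p * q)"
    unfolding e0 e1 e2 e3 e4 e5 e6 e7 e8 e9 e10 e11 e12 by (simp only: add_divide_distrib)
  have num: "(-179081182865) * u^13 * z * w^11 * p * q + 179081182865 * u^13 * z * v^11 * p * q + (-116036303423040) * u^12 * z * v^11 * w^11 * p * q + (-38678767807680) * u^10 * z * v^11 * w^11 * p * q + (-23207260684608) * u^8 * z * v^11 * w^11 * p * q + (-16576614774720) * u^6 * z * v^11 * w^11 * p * q + (-12892922602560) * u^4 * z * v^11 * w^11 * p * q + (-10548754856640) * u^2 * z * v^11 * w^11 * p * q + (-8925869494080) * z * v^11 * w^11 * p * q + (-1933938390384) * v^10 * w^11 * p * q + 58018151711520 * u^13 * z * v^10 * w^11 * p * q + (-58018151711520) * u^13 * z * v^11 * w^11 * p * m1 + 58018151711520 * u^13 * z * v^11 * w^11 * q * m0 = (2325328834807255248819186459076707454748610000 + t * (42182715978976050034820830997073050035113763200 + t * (369404529302954004794499101931779180974890552000 + t * (2080733983324092788871167273877323428392655183200 + t * (8473807470072571026224911683559515432832860435600 + t * (26590311944934406320089854869334544144250577648800 + t * (66902605477395108767631698767971838969729342752000 + t * (138672338326158668440360394296040728843546569028800 + t * (241428565738032397867048331691295324232909397044400 + t * (358176489917151075191161711283716047064662227366400 + t * (457795783708992043961742884120108326273533991874400 + t * (508366438221563362239922023253568178795885781155600 + t * (493680734850668035330469746195756436832524222570400 +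 t * (421364197992821530301050893844151375430249904371200 + t * (317286225560519829160550227862302757816876934371200 + t * (211353325396619794165276754103196366074507079609600 + t * (124769543682808998580624962936808342779030779288000 + t * (65336336600612786573831458793910184056408179625600 + t * (30352609437759227932373485219209692609527828060800 + t * (12500414257006274367637982529484572315487776628800 + t * (4556808679952974893193536736207073708658413980800 + t * (1466638957842149108748555831478303933381266969600 + t * (415312061457538095049581243838759285653493580800 + t * (102977713152686222802403439690826342760538412800 + t * (22218064580130439589355490467759587372500825600 + t * (4137285303249764677728619664443993016830924800 + t * (657864773137054907879658537346610989184640000 + t * (88072796857375757353846893127861891847308800 + t * (9739672104953342014068577335946523410022400 + t * (866243249633262342302766306886822314854400 + t * (59565638552721382701317345939936044646400 + t * (2972689272042833942485253590608425779200 + t * (95826946493439310241966603750041190400 + t * (1498257366910410930120366301170892800 + t * (0)))))))))))))))))))))))))))))))))))"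
    unfolding u_def z_def v_def w_def p_def q_def m0_def m1_def xt by algebra
  have "0 < (2325328834807255248819186459076707454748610000 + t * (42182715978976050034820830997073050035113763200 + t * (369404529302954004794499101931779180974890552000 + t * (2080733983324092788871167273877323428392655183200 + t * (8473807470072571026224911683559515432832860435600 + t * (26590311944934406320089854869334544144250577648800 + t * (66902605477395108767631698767971838969729342752000 + t * (138672338326158668440360394296040728843546569028800 + t * (241428565738032397867048331691295324232909397044400 + t * (358176489917151075191161711283716047064662227366400 + t * (457795783708992043961742884120108326273533991874400 + t * (508366438221563362239922023253568178795885781155600 + t * (493680734850668035330469746195756436832524222570400 + t * (421364197992821530301050893844151375430249904371200 + t * (317286225560519829160550227862302757816876934371200 + t * (211353325396619794165276754103196366074507079609600 + t * (124769543682808998580624962936808342779030779288000 + t * (65336336600612786573831458793910184056408179625600 + t * (30352609437759227932373485219209692609527828060800 + t * (12500414257006274367637982529484572315487776628800 + t * (4556808679952974893193536736207073708658413980800 + t * (1466638957842149108748555831478303933381266969600 + t * (415312061457538095049581243838759285653493580800 + t * (102977713152686222802403439690826342760538412800 + t * (22218064580130439589355490467759587372500825600 + t * (4137285303249764677728619664443993016830924800 + t * (657864773137054907879658537346610989184640000 + t * (88072796857375757353846893127861891847308800 + t * (9739672104953342014068577335946523410022400 + t * (866243249633262342302766306886822314854400 + t * (59565638552721382701317345939936044646400 + t * (2972689272042833942485253590608425779200 + t * (95826946493439310241966603750041190400 + t * (1498257366910410930120366301170892800 + t * (0)))))))))))))))))))))))))))))))))))" using t by (intro hp1 hn1 order.refl)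 simp_all
  then have "0 < ((-179081182865) * u^13 * z * w^11 * p * q + 179081182865 * u^13 * z * v^11 * p * q + (-116036303423040) * u^12 * z * v^11 * w^11 * p * q + (-38678767807680) * u^10 * z * v^11 * w^11 * p * q + (-23207260684608) * u^8 * z * v^11 * w^11 * p * q + (-16576614774720) * u^6 * z * v^11 * w^11 * p * q + (-12892922602560) * u^4 * z * v^11 * w^11 * p * q + (-10548754856640) * u^2 * z * v^11 * w^11 * p * q + (-8925869494080) * z * v^11 * w^11 * p * q + (-1933938390384) * v^10 * w^11 * p * q + 58018151711520 * u^13 * z * v^10 * w^11 * p * q + (-58018151711520) * u^13 * z * v^11 * w^11 * p * m1 + 58018151711520 * u^13 * z * v^11 * w^11 * q * m0) / (58018151711520 * u^13 * z * v^11 * w^11 * p * q)" using p0 q0 up num by simp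
  then have "0 < (-2755095121/892586949408) * (1/(v^11)) + (2755095121/892586949408) * (1/(w^11)) + (-2) * (1/(u^1)) + (-2/3) * (1/(u^3)) + (-2/5) * (1/(u^5)) + (-2/7) * (1/(u^7)) + (-2/9) * (1/(u^9)) + (-2/11) * (1/(u^11)) + (-2/13) * (1/(u^13)) + (-1/30) * (1/(z * v * u^13)) + 1 * (1/(v)) + (-1) * (m1/(q)) + 1 * (m0/(p))" using eq by simp
  then show ?thesis unfolding u_def z_def v_def w_def p_def q_def m0_def m1_def .
qed

lemma bound10up:
  fixes n :: nat assumes n: "1 \<le> n"
  shows "r 10 n - euler_mascheroni < C10 * (1/(real n + 1)^11)"
proof -
  define h where "h m = C10 * (1/(real m + 1)^11) - (r 10 m - euler_mascheroni)" for m
  have "0 < h n"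
  proof (rule tele[OF _ _ n])
    have bl: "(\<lambda>m. C10 * (1/(real m + 1)^11)) \<longlonglongrightarrow> 0" unfolding C10_def C11_def by real_asymp
    show "h \<longlonglongrightarrow> 0" unfolding h_def using tendsto_diff[OF lim10 bl] tendsto_diff[OF bl lim10] by simp_all
  next
    fix m :: nat assume m: "1 \<le> m"
    define x where "x = real m"
    have x: "1 \<le> x" using m by (simp add: x_def)
    have c: "0 < (-2755095121/892586949408) * (1/((x+1)^11)) + (2755095121/892586949408) * (1/((x+2)^11)) + (-2) * (1/((2 * x+1)^1)) + (-2/3) * (1/((2 * x+1)^3)) + (-2/5) * (1/((2 * x+1)^5)) + (-2/7) * (1/((2 * x+1)^7)) + (-2/9) * (1/((2 * x+1)^9)) + (-2/11) * (1/((2 * x+1)^11)) + (-2/13) * (1/((2 * x+1)^13)) + (-1/30) * (1/(x * (x+1) * (2 * x+1)^13)) + 1 * (1/((x+1))) + (-1) * ((757663907 + (1 + x) * (1462202322 + (1 + x) * (3663389030 + (1 + x) * (1473250800 + (1 + x) * (1610005320)))))/((252996980 + (1 + x) * (2155378680 + (1 + x) * (4188622200 + (1 + x) * (7907306400 + (1 + x) * (3483170040 + (1 + x) * (3220010640)))))))) + 1 * ((757663907 + x * (1462202322 + x * (3663389030 + x * (1473250800 + x * (1610005320)))))/((252996980 + x * (2155378680 + x * (4188622200 + x * (7907306400 + x * (3483170040 + x * (3220010640))))))))" using core10up[OF x] .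
    have l: "ln (1+1/x) \<le> 2 * (1/((2 * x+1)^1)) + (2/3) * (1/((2 * x+1)^3)) + (2/5) * (1/((2 * x+1)^5)) + (2/7) * (1/((2 * x+1)^7)) + (2/9) * (1/((2 * x+1)^9)) + (2/11) * (1/((2 * x+1)^11)) + (2/13) * (1/((2 * x+1)^13)) + (1/30) * (1/(x * (x+1) * (2 * x+1)^13))" using ln_bounds7'(2)[OF x] .
    have r0: "R 10 m = (757663907 + x * (1462202322 + x * (3663389030 + x * (1473250800 + x * (1610005320))))) / (252996980 + x * (2155378680 + x * (4188622200 + x * (7907306400 + x * (3483170040 + x * (3220010640))))))" using Rform10[OF m] by (simp add: x_def)
    have r1: "R 10 (Suc m) = (757663907 + (1 + x) * (1462202322 + (1 + x) * (3663389030 + (1 + x) * (1473250800 + (1 + x) * (1610005320))))) / (252996980 + (1 + x) * (2155378680 + (1 + x) * (4188622200 + (1 + x) * (7907306400 + (1 + x) * (3483170040 + (1 + x) * (3220010640))))))" using Rform10[of "Suc m"] m by (simp add: x_def)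
    have d: "(r 10 m - euler_mascheroni) - (r 10 (Suc m) - euler_mascheroni) = ln (1 + 1 / x) - 1/(x + 1) + R 10 (Suc m) - R 10 m"
      using dstep[OF m] by (simp add: x_def)
    have e0: "C10 * (1/(real m + 1)^11) = (-2755095121/892586949408) * (1/(x+1)^11)" by (simp add: x_def C10_def)
    have e1: "C10 * (1/(real (Suc m) + 1)^11) = (-2755095121/892586949408) * (1/(x+2)^11)" by (simp add: x_def C10_def add.commute)
    show "h (Suc m) < h m" unfolding h_def e0 e1 using c l r0 r1 d by linarith
  qed
  then show ?thesis by (simp add: h_def)
qed

lemma core11lo:
  fixes x :: real assumes x: "1 \<le> x"
  shows "0 < 2 * (1/((2 * x+1)^1)) + (2/3) * (1/((2 * x+1)^3)) + (2/5) * (1/((2 * x+1)^5)) + (2/7) * (1/((2 * x+1)^7)) + (2/9) * (1/((2 * x+1)^9)) + (2/11) * (1/((2 * x+1)^11)) + (2/13) * (1/((2 * x+1)^13)) + (-1) * (1/((x+1))) + 1 * (((-262445) + (1 + x) * (2235870 + (1 + x) * ((-1311429) + (1 + x) * (8202600 + (1 + x) * ((-556710) + (1 + x) * (3340260))))))/((0 + (1 + x) * (0 + (1 + x) * (4471740 + (1 + x) * (0 + (1 + x) * (16405200 + (1 + x) * (0 + (1 + x) * (6680520))))))))) + (-1) * (((-262445) + x * (2235870 + x * ((-1311429) + x * (8202600 + x * ((-556710) + x * (3340260))))))/((0 + x * (0 + x * (4471740 + x * (0 + x * (16405200 + x * (0 + x * (6680520))))))))) + (-20169451/3821257440) * (1/((x+1)^12))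 + (20169451/3821257440) * (1/((x+2)^12))"
proof -
  define t where "t = x - 1"
  have t: "0 \<le> t" using x by (simp add: t_def)
  have xt: "x = t + 1" by (simp add: t_def)
  define u z v w where "u = 2 * x+1" and "z = x" and "v = x+1" and "w = x+2"
  define p q m0 m1 where "p = (0 + x * (0 + x * (4471740 + x * (0 + x * (16405200 + x * (0 + x * (6680520)))))))" and "q = (0 + (1 + x) * (0 + (1 + x) * (4471740 + (1 + x) * (0 + (1 + x) * (16405200 + (1 + x) * (0 + (1 + x) * (6680520)))))))" and "m0 = ((-262445) + x * (2235870 + x * ((-1311429) + x * (8202600 + x * ((-556710) + x * (3340260))))))" and "m1 = ((-262445) + (1 + x) * (2235870 + (1 + x) * ((-1311429) + (1 + x) * (8202600 + (1 + x) * ((-556710) + (1 + x) * (3340260))))))"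
  have pe: "p = (27557460 + t * (114647400 + t * (203110740 + t * (199231200 + t * (116613000 + t * (40083120 + t * (6680520 + t * (0))))))))" unfolding p_def xt by algebra
  have qe: "q = (707923440 + t * (1825513200 + t * (2001521340 + t * (1200124800 + t * (417236400 + t * (80166240 + t * (6680520 + t * (0))))))))" unfolding q_def xt by algebra
  have p0: "0 < p" unfolding pe using t by (intro hp1 hn1 order.refl) simp_all
  have q0: "0 < q" unfolding qe using t by (intro hp1 hn1 order.refl) simp_all
  have up: "0 < u" "0 < z" "0 < v" "0 < w" using x by (simp_all add: u_def z_def v_def w_def)
  have e0: "2 * (1/(u^1)) = (7642514880 * u^12 * v^12 * w^12 * p * q)/(3821257440 * u^13 * v^12 * w^12 * p * q)"
    apply (rule frac_eq2) subgoal using p0 q0 up by simp subgoal using p0 q0 up by simp by algebra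
  have e1: "(2/3) * (1/(u^3)) = (2547504960 * u^10 * v^12 * w^12 * p * q)/(3821257440 * u^13 * v^12 * w^12 * p * q)"
    apply (rule frac_eq2) subgoal using p0 q0 up by simp subgoal using p0 q0 up by simp by algebra
  have e2: "(2/5) * (1/(u^5)) = (1528502976 * u^8 * v^12 * w^12 * p * q)/(3821257440 * u^13 * v^12 * w^12 * p * q)"
    apply (rule frac_eq2) subgoal using p0 q0 up by simp subgoal using p0 q0 up by simp by algebra
  have e3: "(2/7) * (1/(u^7)) = (1091787840 * u^6 * v^12 * w^12 * p * q)/(3821257440 * u^13 * v^12 * w^12 * p * q)"
    apply (rule frac_eq2) subgoal using p0 q0 up by simp subgoal using p0 q0 up by simp by algebra
  have e4: "(2/9) * (1/(u^9)) = (849168320 * u^4 * v^12 * w^12 * p * q)/(3821257440 * u^13 * v^12 * w^12 * p * q)"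
    apply (rule frac_eq2) subgoal using p0 q0 up by simp subgoal using p0 q0 up by simp by algebra
  have e5: "(2/11) * (1/(u^11)) = (694774080 * u^2 * v^12 * w^12 * p * q)/(3821257440 * u^13 * v^12 * w^12 * p * q)"
    apply (rule frac_eq2) subgoal using p0 q0 up by simp subgoal using p0 q0 up by simp by algebra
  have e6: "(2/13) * (1/(u^13)) = (587885760 * v^12 * w^12 * p * q)/(3821257440 * u^13 * v^12 * w^12 * p * q)"
    apply (rule frac_eq2) subgoal using p0 q0 up by simp subgoal using p0 q0 up by simp by algebra
  have e7: "(-1) * (1/(v)) = ((-3821257440) * u^13 * v^11 * w^12 * p * q)/(3821257440 * u^13 * v^12 * w^12 * p * q)"
    apply (rule frac_eq2) subgoal using p0 q0 up by simp subgoal using p0 q0 up by simp by algebra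
  have e8: "1 * (m1/(q)) = (3821257440 * u^13 * v^12 * w^12 * p * m1)/(3821257440 * u^13 * v^12 * w^12 * p * q)"
    apply (rule frac_eq2) subgoal using p0 q0 up by simp subgoal using p0 q0 up by simp by algebra
  have e9: "(-1) * (m0/(p)) = ((-3821257440) * u^13 * v^12 * w^12 * q * m0)/(3821257440 * u^13 * v^12 * w^12 * p * q)"
    apply (rule frac_eq2) subgoal using p0 q0 up by simp subgoal using p0 q0 up by simp by algebra
  have e10: "(-20169451/3821257440) * (1/(v^12)) = ((-20169451) * u^13 * w^12 * p * q)/(3821257440 * u^13 * v^12 * w^12 * p * q)"
    apply (rule frac_eq2) subgoal using p0 q0 up by simp subgoal using p0 q0 up by simp by algebra
  have e11: "(20169451/3821257440) * (1/(w^12)) = (20169451 * u^13 * v^12 * p * q)/(3821257440 * u^13 * v^12 * w^12 * p * q)"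
    apply (rule frac_eq2) subgoal using p0 q0 up by simp subgoal using p0 q0 up by simp by algebra
  have eq: "2 * (1/(u^1)) + (2/3) * (1/(u^3)) + (2/5) * (1/(u^5)) + (2/7) * (1/(u^7)) + (2/9) * (1/(u^9)) + (2/11) * (1/(u^11)) + (2/13) * (1/(u^13)) + (-1) * (1/(v)) + 1 * (m1/(q)) + (-1) * (m0/(p)) + (-20169451/3821257440) * (1/(v^12)) + (20169451/3821257440) * (1/(w^12)) = (7642514880 * u^12 * v^12 * w^12 * p * q + 2547504960 * u^10 * v^12 * w^12 * p * q + 1528502976 * u^8 * v^12 * w^12 * p * q + 1091787840 * u^6 * v^12 * w^12 * p * q + 849168320 * u^4 * v^12 * w^12 * p * q + 694774080 * u^2 * v^12 * w^12 * p * q + 587885760 * v^12 * w^12 * p * q + (-3821257440) * u^13 * v^11 * w^12 * p * q + 3821257440 * u^13 * v^12 * w^12 * p * m1 + (-3821257440) * u^13 * v^12 * w^12 * q * m0 + (-20169451) * u^13 * w^12 * p * q + 20169451 * u^13 * v^12 * p * q) / (3821257440 * u^13 * v^12 * w^12 * p * q)"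
    unfolding e0 e1 e2 e3 e4 e5 e6 e7 e8 e9 e10 e11 by (simp only: add_divide_distrib)
  have num: "7642514880 * u^12 * v^12 * w^12 * p * q + 2547504960 * u^10 * v^12 * w^12 * p * q + 1528502976 * u^8 * v^12 * w^12 * p * q + 1091787840 * u^6 * v^12 * w^12 * p * q + 849168320 * u^4 * v^12 * w^12 * p * q + 694774080 * u^2 * v^12 * w^12 * p * q + 587885760 * v^12 * w^12 * p * q + (-3821257440) * u^13 * v^11 * w^12 * p * q + 3821257440 * u^13 * v^12 * w^12 * p * m1 + (-3821257440) * u^13 * v^12 * w^12 * q * m0 + (-20169451) * u^13 * w^12 * p * q + 20169451 * u^13 * v^12 * p * q = (25100989829460005024572674040763438400 + t * (450750310274359369934217861009314126400 + t * (3926309281785311434552875081515544810000 + t * (22100753226248158557207208874585466153600 + t * (90357945381710219875631629842660678202800 + t * (285941382397553698287588857449620778557600 + t * (728831738476251117098624159845375126194000 + t * (1537381895704609066115496850514477542622400 + t * (2736485013004328161627821688554912218266800 + t * (4170252926635711220339026071844666281055200 + t * (5501819939124999650879423014812930013009200 + t * (6338207761047052580809412012826753133939200 + t * (6419081956672806635302044747416611960640400 + t * (5745411809148659309904025642518904832935200 + t * (4563444100897035755483307742370387099008800 + t * (3226555437879609169596091845770461875504000 + t * (2035353148653862807950928667548441644619200 + t * (1147204746689112465175986758786990245392000 + t * (578202274951206892352630895299600501035200 + t * (260612965649835954957691557840868369228800 + t * (104986136066052038579981944356605846932800 + t * (37750391670732878240168824472376850588800 + t * (12091112810911073370393523663290127900800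 + t * (3439516791204086076033597230638743590400 + t * (865600922223142569216256375960482038400 + t * (191742361611918434374241051070887174400 + t * (37141301108935262561927505649026969600 + t * (6238567499359123161072486533493734400 + t * (898833247822364375791850214235910400 + t * (109505550495153421695217826958681600 + t * (11066336059219775889096149521804800 + t * (903069811590438591134308927180800 + t * (57201436442382643121530397760000 + t * (2639704193356133400554055398400 + t * (78979651808622255654393830400 + t * (1150347773269837849087180800 + t * (0)))))))))))))))))))))))))))))))))))))"
    unfolding u_def z_def v_def w_def p_def q_def m0_def m1_def xt by algebra
  have "0 < (25100989829460005024572674040763438400 + t * (450750310274359369934217861009314126400 + t * (3926309281785311434552875081515544810000 + t * (22100753226248158557207208874585466153600 + t * (90357945381710219875631629842660678202800 + t * (285941382397553698287588857449620778557600 + t * (728831738476251117098624159845375126194000 + t * (1537381895704609066115496850514477542622400 + t * (2736485013004328161627821688554912218266800 + t * (4170252926635711220339026071844666281055200 + t * (5501819939124999650879423014812930013009200 + t * (6338207761047052580809412012826753133939200 + t * (6419081956672806635302044747416611960640400 + t * (5745411809148659309904025642518904832935200 + t * (4563444100897035755483307742370387099008800 + t * (3226555437879609169596091845770461875504000 + t * (2035353148653862807950928667548441644619200 + t * (1147204746689112465175986758786990245392000 + t * (578202274951206892352630895299600501035200 + t * (260612965649835954957691557840868369228800 + t * (104986136066052038579981944356605846932800 + t * (37750391670732878240168824472376850588800 + t * (12091112810911073370393523663290127900800 + t * (3439516791204086076033597230638743590400 + t * (865600922223142569216256375960482038400 + t * (191742361611918434374241051070887174400 + t * (37141301108935262561927505649026969600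 + t * (6238567499359123161072486533493734400 + t * (898833247822364375791850214235910400 + t * (109505550495153421695217826958681600 + t * (11066336059219775889096149521804800 + t * (903069811590438591134308927180800 + t * (57201436442382643121530397760000 + t * (2639704193356133400554055398400 + t * (78979651808622255654393830400 + t * (1150347773269837849087180800 + t * (0)))))))))))))))))))))))))))))))))))))" using t by (intro hp1 hn1 order.refl) simp_all
  then have "0 < (7642514880 * u^12 * v^12 * w^12 * p * q + 2547504960 * u^10 * v^12 * w^12 * p * q + 1528502976 * u^8 * v^12 * w^12 * p * q + 1091787840 * u^6 * v^12 * w^12 * p * q + 849168320 * u^4 * v^12 * w^12 * p * q + 694774080 * u^2 * v^12 * w^12 * p * q + 587885760 * v^12 * w^12 * p * q + (-3821257440) * u^13 * v^11 * w^12 * p * q + 3821257440 * u^13 * v^12 * w^12 * p * m1 + (-3821257440) * u^13 * v^12 * w^12 * q * m0 + (-20169451) * u^13 * w^12 * p * q + 20169451 * u^13 * v^12 * p * q) / (3821257440 * u^13 * v^12 * w^12 * p * q)" using p0 q0 up num by simp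
  then have "0 < 2 * (1/(u^1)) + (2/3) * (1/(u^3)) + (2/5) * (1/(u^5)) + (2/7) * (1/(u^7)) + (2/9) * (1/(u^9)) + (2/11) * (1/(u^11)) + (2/13) * (1/(u^13)) + (-1) * (1/(v)) + 1 * (m1/(q)) + (-1) * (m0/(p)) + (-20169451/3821257440) * (1/(v^12)) + (20169451/3821257440) * (1/(w^12))" using eq by simp
  then show ?thesis unfolding u_def z_def v_def w_def p_def q_def m0_def m1_def .
qed

lemma bound11lo:
  fixes n :: nat assumes n: "1 \<le> n"
  shows "C11 * (1/(real n + 1)^12) < r 11 n - euler_mascheroni"
proof -
  define h where "h m = (r 11 m - euler_mascheroni) - C11 * (1/(real m + 1)^12)" for m
  have "0 < h n"
  proof (rule tele[OF _ _ n])
    have bl: "(\<lambda>m. C11 * (1/(real m + 1)^12)) \<longlonglongrightarrow> 0" unfolding C10_def C11_def by real_asymp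
    show "h \<longlonglongrightarrow> 0" unfolding h_def using tendsto_diff[OF lim11 bl] tendsto_diff[OF bl lim11] by simp_all
  next
    fix m :: nat assume m: "1 \<le> m"
    define x where "x = real m"
    have x: "1 \<le> x" using m by (simp add: x_def)
    have c: "0 < 2 * (1/((2 * x+1)^1)) + (2/3) * (1/((2 * x+1)^3)) + (2/5) * (1/((2 * x+1)^5)) + (2/7) * (1/((2 * x+1)^7)) + (2/9) * (1/((2 * x+1)^9)) + (2/11) * (1/((2 * x+1)^11)) + (2/13) * (1/((2 * x+1)^13)) + (-1) * (1/((x+1))) + 1 * (((-262445) + (1 + x) * (2235870 + (1 + x) * ((-1311429) + (1 + x) * (8202600 + (1 + x) * ((-556710) + (1 + x) * (3340260))))))/((0 + (1 + x) * (0 + (1 + x) * (4471740 + (1 + x) * (0 + (1 + x) * (16405200 + (1 + x) * (0 + (1 + x) * (6680520))))))))) + (-1) * (((-262445) + x * (2235870 + x * ((-1311429) + x * (8202600 + x * ((-556710) + x * (3340260))))))/((0 + x * (0 + x * (4471740 + x * (0 + x * (16405200 + x * (0 + x * (6680520))))))))) + (-20169451/3821257440) * (1/((x+1)^12)) + (20169451/3821257440) * (1/((x+2)^12))" using core11lo[OF x] .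
    have l: "2 * (1/((2 * x+1)^1)) + (2/3) * (1/((2 * x+1)^3)) + (2/5) * (1/((2 * x+1)^5)) + (2/7) * (1/((2 * x+1)^7)) + (2/9) * (1/((2 * x+1)^9)) + (2/11) * (1/((2 * x+1)^11)) + (2/13) * (1/((2 * x+1)^13)) \<le> ln (1+1/x)" using ln_bounds7'(1)[OF x] .
    have r0: "R 11 m = ((-262445) + x * (2235870 + x * ((-1311429) + x * (8202600 + x * ((-556710) + x * (3340260)))))) / (0 + x * (0 + x * (4471740 + x * (0 + x * (16405200 + x * (0 + x * (6680520)))))))" using Rform11[OF m] by (simp add: x_def)
    have r1: "R 11 (Suc m) = ((-262445) + (1 + x) * (2235870 + (1 + x) * ((-1311429) + (1 + x) * (8202600 + (1 + x) * ((-556710) + (1 + x) * (3340260)))))) / (0 + (1 + x) * (0 + (1 + x) * (4471740 + (1 + x) * (0 + (1 + x) * (16405200 + (1 + x) * (0 + (1 + x) * (6680520)))))))" using Rform11[of "Suc m"] m by (simp add: x_def)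
    have d: "(r 11 m - euler_mascheroni) - (r 11 (Suc m) - euler_mascheroni) = ln (1 + 1 / x) - 1/(x + 1) + R 11 (Suc m) - R 11 m"
      using dstep[OF m] by (simp add: x_def)
    have e0: "C11 * (1/(real m + 1)^12) = (20169451/3821257440) * (1/(x+1)^12)" by (simp add: x_def C11_def)
    have e1: "C11 * (1/(real (Suc m) + 1)^12) = (20169451/3821257440) * (1/(x+2)^12)" by (simp add: x_def C11_def add.commute)
    show "h (Suc m) < h m" unfolding h_def e0 e1 using c l r0 r1 d by linarith
  qed
  then show ?thesis by (simp add: h_def)
qed

lemma core11up:
  fixes x :: real assumes x: "1 \<le> x"
  shows "0 < (20169451/3821257440) * (1/(x^12)) + (-20169451/3821257440) * (1/((x+1)^12)) + (-2) * (1/((2 * x+1)^1)) + (-2/3) * (1/((2 * x+1)^3)) + (-2/5) * (1/((2 * x+1)^5)) + (-2/7) * (1/((2 * x+1)^7)) + (-2/9) * (1/((2 * x+1)^9)) + (-2/11) * (1/((2 * x+1)^11)) + (-2/13) * (1/((2 * x+1)^13)) + (-1/30) * (1/(x * (x+1) * (2 * x+1)^13)) + 1 * (1/((x+1))) + (-1) * (((-262445) + (1 + x) * (2235870 + (1 + x) * ((-1311429) + (1 + x) * (8202600 + (1 + x) * ((-556710) + (1 + x) * (3340260))))))/((0 + (1 + x) * (0 + (1 + x) * (4471740 + (1 + x) * (0 + (1 + x) * (16405200 + (1 + x) * (0 + (1 + x) * (6680520))))))))) + 1 * (((-262445) + x * (2235870 + x * ((-1311429) + x * (8202600 + x * ((-556710)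 + x * (3340260))))))/((0 + x * (0 + x * (4471740 + x * (0 + x * (16405200 + x * (0 + x * (6680520)))))))))"
proof -
  define t where "t = x - 1"
  have t: "0 \<le> t" using x by (simp add: t_def)
  have xt: "x = t + 1" by (simp add: t_def)
  define u z v w where "u = 2 * x+1" and "z = x" and "v = x+1" and "w = x+2"
  define p q m0 m1 where "p = (0 + x * (0 + x * (4471740 + x * (0 + x * (16405200 + x * (0 + x * (6680520)))))))" and "q = (0 + (1 + x) * (0 + (1 + x) * (4471740 + (1 + x) * (0 + (1 + x) * (16405200 + (1 + x) * (0 + (1 + x) * (6680520)))))))" and "m0 = ((-262445) + x * (2235870 + x * ((-1311429) + x * (8202600 + x * ((-556710) + x * (3340260))))))" and "m1 = ((-262445) + (1 + x) * (2235870 + (1 + x) * ((-1311429) + (1 + x) * (8202600 + (1 + x) * ((-556710) + (1 + x) * (3340260))))))"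
  have pe: "p = (27557460 + t * (114647400 + t * (203110740 + t * (199231200 + t * (116613000 + t * (40083120 + t * (6680520 + t * (0))))))))" unfolding p_def xt by algebra
  have qe: "q = (707923440 + t * (1825513200 + t * (2001521340 + t * (1200124800 + t * (417236400 + t * (80166240 + t * (6680520 + t * (0))))))))" unfolding q_def xt by algebra
  have p0: "0 < p" unfolding pe using t by (intro hp1 hn1 order.refl) simp_all
  have q0: "0 < q" unfolding qe using t by (intro hp1 hn1 order.refl) simp_all
  have up: "0 < u" "0 < z" "0 < v" "0 < w" using x by (simp_all add: u_def z_def v_def w_def)
  have e0: "(20169451/3821257440) * (1/(z^12)) = (20169451 * u^13 * v^12 * p * q)/(3821257440 * u^13 * z^12 * v^12 * p * q)"
    apply (rule frac_eq2) subgoal using p0 q0 up by simp subgoal using p0 q0 up by simp by algebra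
  have e1: "(-20169451/3821257440) * (1/(v^12)) = ((-20169451) * u^13 * z^12 * p * q)/(3821257440 * u^13 * z^12 * v^12 * p * q)"
    apply (rule frac_eq2) subgoal using p0 q0 up by simp subgoal using p0 q0 up by simp by algebra
  have e2: "(-2) * (1/(u^1)) = ((-7642514880) * u^12 * z^12 * v^12 * p * q)/(3821257440 * u^13 * z^12 * v^12 * p * q)"
    apply (rule frac_eq2) subgoal using p0 q0 up by simp subgoal using p0 q0 up by simp by algebra
  have e3: "(-2/3) * (1/(u^3)) = ((-2547504960) * u^10 * z^12 * v^12 * p * q)/(3821257440 * u^13 * z^12 * v^12 * p * q)"
    apply (rule frac_eq2) subgoal using p0 q0 up by simp subgoal using p0 q0 up by simp by algebra
  have e4: "(-2/5) * (1/(u^5)) = ((-1528502976) * u^8 * z^12 * v^12 * p * q)/(3821257440 * u^13 * z^12 * v^12 * p * q)"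
    apply (rule frac_eq2) subgoal using p0 q0 up by simp subgoal using p0 q0 up by simp by algebra
  have e5: "(-2/7) * (1/(u^7)) = ((-1091787840) * u^6 * z^12 * v^12 * p * q)/(3821257440 * u^13 * z^12 * v^12 * p * q)"
    apply (rule frac_eq2) subgoal using p0 q0 up by simp subgoal using p0 q0 up by simp by algebra
  have e6: "(-2/9) * (1/(u^9)) = ((-849168320) * u^4 * z^12 * v^12 * p * q)/(3821257440 * u^13 * z^12 * v^12 * p * q)"
    apply (rule frac_eq2) subgoal using p0 q0 up by simp subgoal using p0 q0 up by simp by algebra
  have e7: "(-2/11) * (1/(u^11)) = ((-694774080) * u^2 * z^12 * v^12 * p * q)/(3821257440 * u^13 * z^12 * v^12 * p * q)"
    apply (rule frac_eq2) subgoal using p0 q0 up by simp subgoal using p0 q0 up by simp by algebra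
  have e8: "(-2/13) * (1/(u^13)) = ((-587885760) * z^12 * v^12 * p * q)/(3821257440 * u^13 * z^12 * v^12 * p * q)"
    apply (rule frac_eq2) subgoal using p0 q0 up by simp subgoal using p0 q0 up by simp by algebra
  have e9: "(-1/30) * (1/(z * v * u^13)) = ((-127375248) * z^11 * v^11 * p * q)/(3821257440 * u^13 * z^12 * v^12 * p * q)"
    apply (rule frac_eq2) subgoal using p0 q0 up by simp subgoal using p0 q0 up by simp by algebra
  have e10: "1 * (1/(v)) = (3821257440 * u^13 * z^12 * v^11 * p * q)/(3821257440 * u^13 * z^12 * v^12 * p * q)"
    apply (rule frac_eq2) subgoal using p0 q0 up by simp subgoal using p0 q0 up by simp by algebra
  have e11: "(-1) * (m1/(q)) = ((-3821257440) * u^13 * z^12 * v^12 * p * m1)/(3821257440 * u^13 * z^12 * v^12 * p * q)"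
    apply (rule frac_eq2) subgoal using p0 q0 up by simp subgoal using p0 q0 up by simp by algebra
  have e12: "1 * (m0/(p)) = (3821257440 * u^13 * z^12 * v^12 * q * m0)/(3821257440 * u^13 * z^12 * v^12 * p * q)"
    apply (rule frac_eq2) subgoal using p0 q0 up by simp subgoal using p0 q0 up by simp by algebra
  have eq: "(20169451/3821257440) * (1/(z^12)) + (-20169451/3821257440) * (1/(v^12)) + (-2) * (1/(u^1)) + (-2/3) * (1/(u^3)) + (-2/5) * (1/(u^5)) + (-2/7) * (1/(u^7)) + (-2/9) * (1/(u^9)) + (-2/11) * (1/(u^11)) + (-2/13) * (1/(u^13)) + (-1/30) * (1/(z * v * u^13)) + 1 * (1/(v)) + (-1) * (m1/(q)) + 1 * (m0/(p)) = (20169451 * u^13 * v^12 * p * q + (-20169451) * u^13 * z^12 * p * q + (-7642514880) * u^12 * z^12 * v^12 * p * q + (-2547504960) * u^10 * z^12 * v^12 * p * q + (-1528502976) * u^8 * z^12 * v^12 * p * q + (-1091787840) * u^6 * z^12 * v^12 * p * q + (-849168320) * u^4 * z^12 * v^12 * p * q + (-694774080) * u^2 * z^12 * v^12 * p * q + (-587885760) * z^12 * v^12 * p * q + (-127375248) * z^11 * v^11 * p * q + 3821257440 * u^13 * z^12 * v^11 * p * q + (-3821257440) * u^13 * z^12 * v^12 * p * m1 + 3821257440 * u^13 * z^12 * v^12 * q * m0) / (3821257440 * u^13 * z^12 * v^12 * p * q)"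
    unfolding e0 e1 e2 e3 e4 e5 e6 e7 e8 e9 e10 e11 e12 by (simp only: add_divide_distrib)
  have num: "20169451 * u^13 * v^12 * p * q + (-20169451) * u^13 * z^12 * p * q + (-7642514880) * u^12 * z^12 * v^12 * p * q + (-2547504960) * u^10 * z^12 * v^12 * p * q + (-1528502976) * u^8 * z^12 * v^12 * p * q + (-1091787840) * u^6 * z^12 * v^12 * p * q + (-849168320) * u^4 * z^12 * v^12 * p * q + (-694774080) * u^2 * z^12 * v^12 * p * q + (-587885760) * z^12 * v^12 * p * q + (-127375248) * z^11 * v^11 * p * q + 3821257440 * u^13 * z^12 * v^11 * p * q + (-3821257440) * u^13 * z^12 * v^12 * p * m1 + 3821257440 * u^13 * z^12 * v^12 * q * m0 = (2521055701114252883252864119368000 + t * (53742365484180465388174544086747200 + t * (556940929629409048855999160997757200 + t * (3737942154099755976668807108908166400 + t * (18261901815099917212581078662568558000 + t * (69207612035450668757439187688014096800 + t * (211702962321521308088404663160509707600 + t * (537037375744764765547898434881480590400 + t * (1151874595311933726084963368086975278000 + t * (2119271837959518933149030528524498744800 + t * (3381517201647807239434647046943080676400 + t * (4719066031500606855522868054105708502400 + t * (5797920454998671152219329156799137632400 + t * (6303238604721199390312892220900517044000 + t * (6087020920932436702287195931906572410400 + t * (5236274578835368105490473817246342323200 + t * (4020241508624761800071414397553952740800 + t * (2757872662046120127365066113620218006400 + t * (1690962612658935576809385573063468504000 + t * (926294363419251868041769706282803315200 + t * (452796275937459511952554410153900302400 + t * (197117677300366260930307683301133616000 + t * (76200619525908151968999584774726716800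 + t * (26055485497528927196981118364070899200 + t * (7840071110060313262092859038486307200 + t * (2062289122559597588273938209973593600 + t * (470216500794023157680533189443590400 + t * (91916629862059997315107786831104000 + t * (15183729298339383261514452399072000 + t * (2078913879850228674322399372224000 + t * (229635748401239065723478956224000 + t * (19666799673908373701613609984000 + t * (1225569971453969460127902912000 + t * (49445150196820909576421376000 + t * (969512748957272736792576000 + t * (0))))))))))))))))))))))))))))))))))))"
    unfolding u_def z_def v_def w_def p_def q_def m0_def m1_def xt by algebra
  have "0 < (2521055701114252883252864119368000 + t * (53742365484180465388174544086747200 + t * (556940929629409048855999160997757200 + t * (3737942154099755976668807108908166400 + t * (18261901815099917212581078662568558000 + t * (69207612035450668757439187688014096800 + t * (211702962321521308088404663160509707600 + t * (537037375744764765547898434881480590400 + t * (1151874595311933726084963368086975278000 + t * (2119271837959518933149030528524498744800 + t * (3381517201647807239434647046943080676400 + t * (4719066031500606855522868054105708502400 + t * (5797920454998671152219329156799137632400 + t * (6303238604721199390312892220900517044000 + t * (6087020920932436702287195931906572410400 + t * (5236274578835368105490473817246342323200 + t * (4020241508624761800071414397553952740800 + t * (2757872662046120127365066113620218006400 + t * (1690962612658935576809385573063468504000 + t * (926294363419251868041769706282803315200 + t * (452796275937459511952554410153900302400 + t * (197117677300366260930307683301133616000 + t * (76200619525908151968999584774726716800 + t * (26055485497528927196981118364070899200 + t * (7840071110060313262092859038486307200 + t * (2062289122559597588273938209973593600 + t * (470216500794023157680533189443590400 + t * (91916629862059997315107786831104000 + t * (15183729298339383261514452399072000 + t * (2078913879850228674322399372224000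 + t * (229635748401239065723478956224000 + t * (19666799673908373701613609984000 + t * (1225569971453969460127902912000 + t * (49445150196820909576421376000 + t * (969512748957272736792576000 + t * (0))))))))))))))))))))))))))))))))))))" using t by (intro hp1 hn1 order.refl) simp_all
  then have "0 < (20169451 * u^13 * v^12 * p * q + (-20169451) * u^13 * z^12 * p * q + (-7642514880) * u^12 * z^12 * v^12 * p * q + (-2547504960) * u^10 * z^12 * v^12 * p * q + (-1528502976) * u^8 * z^12 * v^12 * p * q + (-1091787840) * u^6 * z^12 * v^12 * p * q + (-849168320) * u^4 * z^12 * v^12 * p * q + (-694774080) * u^2 * z^12 * v^12 * p * q + (-587885760) * z^12 * v^12 * p * q + (-127375248) * z^11 * v^11 * p * q + 3821257440 * u^13 * z^12 * v^11 * p * q + (-3821257440) * u^13 * z^12 * v^12 * p * m1 + 3821257440 * u^13 * z^12 * v^12 * q * m0) / (3821257440 * u^13 * z^12 * v^12 * p * q)" using p0 q0 up num by simp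
  then have "0 < (20169451/3821257440) * (1/(z^12)) + (-20169451/3821257440) * (1/(v^12)) + (-2) * (1/(u^1)) + (-2/3) * (1/(u^3)) + (-2/5) * (1/(u^5)) + (-2/7) * (1/(u^7)) + (-2/9) * (1/(u^9)) + (-2/11) * (1/(u^11)) + (-2/13) * (1/(u^13)) + (-1/30) * (1/(z * v * u^13)) + 1 * (1/(v)) + (-1) * (m1/(q)) + 1 * (m0/(p))" using eq by simp
  then show ?thesis unfolding u_def z_def v_def w_def p_def q_def m0_def m1_def .
qed

lemma bound11up:
  fixes n :: nat assumes n: "1 \<le> n"
  shows "r 11 n - euler_mascheroni < C11 * (1/(real n)^12)"
proof -
  define h where "h m = C11 * (1/(real m)^12) - (r 11 m - euler_mascheroni)" for m
  have "0 < h n"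
  proof (rule tele[OF _ _ n])
    have bl: "(\<lambda>m. C11 * (1/(real m)^12)) \<longlonglongrightarrow> 0" unfolding C10_def C11_def by real_asymp
    show "h \<longlonglongrightarrow> 0" unfolding h_def using tendsto_diff[OF lim11 bl] tendsto_diff[OF bl lim11] by simp_all
  next
    fix m :: nat assume m: "1 \<le> m"
    define x where "x = real m"
    have x: "1 \<le> x" using m by (simp add: x_def)
    have c: "0 < (20169451/3821257440) * (1/(x^12)) + (-20169451/3821257440) * (1/((x+1)^12)) + (-2) * (1/((2 * x+1)^1)) + (-2/3) * (1/((2 * x+1)^3)) + (-2/5) * (1/((2 * x+1)^5)) + (-2/7) * (1/((2 * x+1)^7)) + (-2/9) * (1/((2 * x+1)^9)) + (-2/11) * (1/((2 * x+1)^11)) + (-2/13) * (1/((2 * x+1)^13)) + (-1/30) * (1/(x * (x+1) * (2 * x+1)^13)) + 1 * (1/((x+1))) + (-1) * (((-262445) + (1 + x) * (2235870 + (1 + x) * ((-1311429) + (1 + x) * (8202600 + (1 + x) * ((-556710) + (1 + x) * (3340260))))))/((0 + (1 + x) * (0 + (1 + x) * (4471740 + (1 + x) * (0 + (1 + x) * (16405200 + (1 + x) * (0 + (1 + x) * (6680520))))))))) + 1 * (((-262445) + x * (2235870 + x * ((-1311429) + x * (8202600 + x * ((-556710) + x * (3340260))))))/((0 + x * (0 + x * (4471740 + x * (0 + x * (16405200 + x * (0 + x * (6680520)))))))))" using core11up[OF x] .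
    have l: "ln (1+1/x) \<le> 2 * (1/((2 * x+1)^1)) + (2/3) * (1/((2 * x+1)^3)) + (2/5) * (1/((2 * x+1)^5)) + (2/7) * (1/((2 * x+1)^7)) + (2/9) * (1/((2 * x+1)^9)) + (2/11) * (1/((2 * x+1)^11)) + (2/13) * (1/((2 * x+1)^13)) + (1/30) * (1/(x * (x+1) * (2 * x+1)^13))" using ln_bounds7'(2)[OF x] .
    have r0: "R 11 m = ((-262445) + x * (2235870 + x * ((-1311429) + x * (8202600 + x * ((-556710) + x * (3340260)))))) / (0 + x * (0 + x * (4471740 + x * (0 + x * (16405200 + x * (0 + x * (6680520)))))))" using Rform11[OF m] by (simp add: x_def)
    have r1: "R 11 (Suc m) = ((-262445) + (1 + x) * (2235870 + (1 + x) * ((-1311429) + (1 + x) * (8202600 + (1 + x) * ((-556710) + (1 + x) * (3340260)))))) / (0 + (1 + x) * (0 + (1 + x) * (4471740 + (1 + x) * (0 + (1 + x) * (16405200 + (1 + x) * (0 + (1 + x) * (6680520)))))))" using Rform11[of "Suc m"] m by (simp add: x_def)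
    have d: "(r 11 m - euler_mascheroni) - (r 11 (Suc m) - euler_mascheroni) = ln (1 + 1 / x) - 1/(x + 1) + R 11 (Suc m) - R 11 m"
      using dstep[OF m] by (simp add: x_def)
    have e0: "C11 * (1/(real m)^12) = (20169451/3821257440) * (1/x^12)" by (simp add: x_def C11_def)
    have e1: "C11 * (1/(real (Suc m))^12) = (20169451/3821257440) * (1/(x+1)^12)" by (simp add: x_def C11_def add.commute)
    show "h (Suc m) < h m" unfolding h_def e0 e1 using c l r0 r1 d by linarith
  qed
  then show ?thesis by (simp add: h_def)
qed


theorem theorem2:
  fixes n :: nat
  assumes "n \<ge> 1"
  shows "- C10 * (1 / (real n + 1) ^ 11) < euler_mascheroni - r 10 n
       \<and> euler_mascheroni - r 10 n < - C10 * (1 / (real n) ^ 11)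
       \<and> C11 * (1 / (real n + 1) ^ 12) < r 11 n - euler_mascheroni
       \<and> r 11 n - euler_mascheroni < C11 * (1 / (real n) ^ 12)"
  using bound10lo[OF assms] bound10up[OF assms] bound11lo[OF assms] bound11up[OF assms]
  by linarith

end
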